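(* Let $m,n\ge1$ and $Z\subset[1,m]\times[1,n]$. Let $R=\mathbb{C}[x_{ij}:(i,j)\in([1,m]\times[1,n])\setminus Z]$ and let $X$ be the $m\times n$ matrix whose $(i,j)$-entry is $x_{ij}$ if $(i,j)\notin Z$ and $0$ if $(i,j)\in Z$. Let $\mathcal{G}_2(Z)\subset R$ be the set of $2\times2$ minors of $X$, and $I_2(Z)$ the ideal they generate. Then for every total order on the variables of $R$, $\mathcal{G}_2(Z)$ is a Gröbner basis of $I_2(Z)$ with respect to the degree reverse lexicographic order induced by that total order.
   Context: Degree revlex order (for variables ordered $x_1>\dots>x_N$): $x^a>x^b$ if $\sum a_i>\sum b_i$, or the degrees are equal and the rightmost nonzero entry of $a-b$ is negative. A finite generating set $G$ of $I$ is a Gröbner basis if the initial ideal of $I$ is generated by the initial monomials of elements of $G$. *)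

theory Defs
  imports Complex_Main "HOL-Library.Poly_Mapping"
begin

text \<open>Variables are indexed by pairs (i,j). A monomial is a finitely supported
exponent vector, a polynomial is a finitely supported map from monomials to complex
coefficients.\<close>

type_synonym var = "nat \<times> nat"
type_synonym mon = "var \<Rightarrow>\<^sub>0 nat"
type_synonym cpoly = "mon \<Rightarrow>\<^sub>0 complex"

definition Var :: "var \<Rightarrow> cpoly" where
  "Var v = Poly_Mapping.single (Poly_Mapping.single v 1) 1"

definition mon_poly :: "mon \<Rightarrow> cpoly" where
  "mon_poly a = Poly_Mapping.single a 1"

definition deg :: "mon \<Rightarrow> nat" where
  "deg a = (\<Sum>v\<in>Poly_Mapping.keys a. Poly_Mapping.lookup a v)"

text \<open>The polynomial ring C[x_v : v \<in> V], as a subset of all polynomials.\<close>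
definition polys :: "var set \<Rightarrow> cpoly set" where
  "polys V = {f. \<forall>a\<in>Poly_Mapping.keys f. Poly_Mapping.keys a \<subseteq> V}"

definition ideal_gen :: "var set \<Rightarrow> cpoly set \<Rightarrow> cpoly set" where
  "ideal_gen V G = {f. \<exists>S c. finite S \<and> S \<subseteq> G \<and> (\<forall>g\<in>S. c g \<in> polys V)
                          \<and> f = (\<Sum>g\<in>S. c g * g)}"

text \<open>Degree reverse lexicographic order induced by a strict total order r on the
variables V ((v,w) \<in> r means v < w). drl_greater V r a b means a > b.\<close>
definition drl_greater :: "var set \<Rightarrow> var rel \<Rightarrow> mon \<Rightarrow> mon \<Rightarrow> bool" where
  "drl_greater V r a b \<longleftrightarrow> deg a > deg b \<or>
     (deg a = deg b \<and> (\<exists>v\<in>V. Poly_Mapping.lookup a v < Poly_Mapping.lookup b v \<and>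
                              (\<forall>w\<in>V. (w, v) \<in> r \<longrightarrow> Poly_Mapping.lookup a w = Poly_Mapping.lookup b w)))"

definition init_mon :: "var set \<Rightarrow> var rel \<Rightarrow> cpoly \<Rightarrow> mon" where
  "init_mon V r f = (THE a. a \<in> Poly_Mapping.keys f \<and> (\<forall>b\<in>Poly_Mapping.keys f. b \<noteq> a \<longrightarrow> drl_greater V r a b))"

definition init_ideal :: "var set \<Rightarrow> var rel \<Rightarrow> cpoly set \<Rightarrow> cpoly set" where
  "init_ideal V r I = ideal_gen V {mon_poly (init_mon V r f) | f. f \<in> I \<and> f \<noteq> 0}"

definition is_groebner_basis :: "var set \<Rightarrow> var rel \<Rightarrow> cpoly set \<Rightarrow> cpoly set \<Rightarrow> bool" where
  "is_groebner_basis V r G I \<longleftrightarrow> G \<subseteq> polys V \<and> finite G \<and> ideal_gen V G = I \<and>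
     init_ideal V r I = ideal_gen V {mon_poly (init_mon V r g) | g. g \<in> G \<and> g \<noteq> 0}"

definition Xmat :: "var set \<Rightarrow> nat \<Rightarrow> nat \<Rightarrow> cpoly" where
  "Xmat Z i j = (if (i, j) \<in> Z then 0 else Var (i, j))"

definition minors2 :: "nat \<Rightarrow> nat \<Rightarrow> var set \<Rightarrow> cpoly set" where
  "minors2 m n Z = {Xmat Z i1 j1 * Xmat Z i2 j2 - Xmat Z i1 j2 * Xmat Z i2 j1 | i1 i2 j1 j2.
      1 \<le> i1 \<and> i1 < i2 \<and> i2 \<le> m \<and> 1 \<le> j1 \<and> j1 < j2 \<and> j2 \<le> n}"

end

theory Submission
  imports Defs "HOL-Library.FuncSet"
begin


lemma deg_sum_superset:
  assumes "finite K" "Poly_Mapping.keys a \<subseteq> K"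
  shows "deg a = (\<Sum>v\<in>K. Poly_Mapping.lookup a v)"
  unfolding deg_def
  by (rule sum.mono_neutral_left) (use assms in \<open>auto simp: in_keys_iff\<close>)

lemma deg_add: "deg (a + b) = deg a + deg b"
proof -
  let ?K = "Poly_Mapping.keys a \<union> Poly_Mapping.keys b"
  have "deg (a+b) = (\<Sum>v\<in>?K. Poly_Mapping.lookup (a+b) v)"
    by (rule deg_sum_superset) (auto dest: set_mp[OF keys_add])
  also have "\<dots> = (\<Sum>v\<in>?K. Poly_Mapping.lookup a v) + (\<Sum>v\<in>?K. Poly_Mapping.lookup b v)"
    by (simp add: lookup_add sum.distrib)
  also have "\<dots> = deg a + deg b"
    by (subst (1 2) deg_sum_superset[of ?K]) auto
  finally show ?thesis .
qed

lemma deg_single [simp]: "deg (Poly_Mapping.single v n) = n"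
  by (simp add: deg_def)

lemma deg_zero [simp]: "deg 0 = 0"
  by (simp add: deg_def)

lemma lookup_le_deg: "Poly_Mapping.lookup a v \<le> deg a"
proof (cases "v \<in> Poly_Mapping.keys a")
  case True then show ?thesis unfolding deg_def by (intro member_le_sum) auto
next
  case False then show ?thesis by (simp add: in_keys_iff)
qed

locale mo =
  fixes V :: "var set" and r :: "var rel"
  assumes finV: "finite V" and rtrans: "trans r" and rirr: "\<And>x. (x,x) \<notin> r"
    and rtot: "\<And>x y. x\<in>V \<Longrightarrow> y\<in>V \<Longrightarrow> x\<noteq>y \<Longrightarrow> (x,y)\<in>r \<or> (y,x)\<in>r"
begin

abbreviation gt where "gt \<equiv> drl_greater V r"

lemma rtr: "(x,y) \<in> r \<Longrightarrow> (y,z) \<in> r \<Longrightarrow> (x,z) \<in> r"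
  using rtrans by (meson transD)

lemma min_exists:
  assumes "finite A" "A \<noteq> {}" "A \<subseteq> V"
  shows "\<exists>\<mu>\<in>A. \<forall>z\<in>A. z \<noteq> \<mu> \<longrightarrow> (\<mu>,z) \<in> r"
  using assms
proof (induction A rule: finite_ne_induct)
  case (singleton x) then show ?case by auto
next
  case (insert x F)
  then obtain \<mu> where mu: "\<mu>\<in>F" "\<forall>z\<in>F. z \<noteq> \<mu> \<longrightarrow> (\<mu>,z) \<in> r" by auto
  have "x \<noteq> \<mu>" using insert mu by auto
  moreover have "x \<in> V" "\<mu> \<in> V" using insert.prems mu by auto
  ultimately have "(x,\<mu>) \<in> r \<or> (\<mu>,x) \<in> r" using rtot by blast
  then show ?case
  proof
    assume "(x,\<mu>) \<in> r"
    show ?thesis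
    proof (intro bexI[of _ x] ballI impI)
      fix z assume "z \<in> insert x F" "z \<noteq> x"
      then have "z \<in> F" by simp
      then show "(x,z)\<in>r" using mu \<open>(x,\<mu>)\<in>r\<close> rtr by metis
    qed simp
  next
    assume "(\<mu>,x) \<in> r"
    then show ?thesis using mu by (intro bexI[of _ \<mu>]) auto
  qed
qed

lemma gt_irrefl: "\<not> gt a a"
  unfolding drl_greater_def by auto

lemma gt_trans:
  assumes "gt a b" "gt b c" shows "gt a c"
proof -
  have d: "deg b \<le> deg a" "deg c \<le> deg b" using assms unfolding drl_greater_def by auto
  show ?thesis
  proof (cases "deg a = deg b \<and> deg b = deg c")
    case False
    then show ?thesis using assms d unfolding drl_greater_def by auto
  next
    case True
    from assms(1) True obtain v where v: "v\<in>V" "Poly_Mapping.lookup a v < Poly_Mapping.lookup b v"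
      "\<forall>w\<in>V. (w, v) \<in> r \<longrightarrow> Poly_Mapping.lookup a w = Poly_Mapping.lookup b w"
      unfolding drl_greater_def by auto
    from assms(2) True obtain u where u: "u\<in>V" "Poly_Mapping.lookup b u < Poly_Mapping.lookup c u"
      "\<forall>w\<in>V. (w, u) \<in> r \<longrightarrow> Poly_Mapping.lookup b w = Poly_Mapping.lookup c w"
      unfolding drl_greater_def by auto
    consider "u = v" | "(u,v) \<in> r" | "(v,u) \<in> r" using rtot[OF u(1) v(1)] by blast
    then show ?thesis
    proof cases
      case 1
      have "Poly_Mapping.lookup a v < Poly_Mapping.lookup c v" using u(2) v(2) 1 by simp
      moreover have "\<forall>w\<in>V. (w,v)\<in>r \<longrightarrow> Poly_Mapping.lookup a w = Poly_Mapping.lookup c w"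
        using u(3) v(3) 1 by simp
      moreover have "deg a = deg c" using True by simp
      ultimately show ?thesis using v(1) unfolding drl_greater_def by blast
    next
      case 2
      have "Poly_Mapping.lookup a u < Poly_Mapping.lookup c u" using v(3)[rule_format, OF u(1) 2] u(2) by simp
      moreover have "\<forall>w\<in>V. (w,u)\<in>r \<longrightarrow> Poly_Mapping.lookup a w = Poly_Mapping.lookup c w"
      proof (intro ballI impI)
        fix w assume w: "w\<in>V" "(w,u)\<in>r"
        then have "(w,v)\<in>r" using rtr 2 by blast
        then show "Poly_Mapping.lookup a w = Poly_Mapping.lookup c w" using u(3) v(3) w by simp
      qed
      moreover have "deg a = deg c" using True by simp
      ultimately show ?thesis using u(1) unfolding drl_greater_def by blast
    next
      case 3
      have "Poly_Mapping.lookup a v < Poly_Mapping.lookup c v" using u(3)[rule_format, OF v(1) 3] v(2) by simp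
      moreover have "\<forall>w\<in>V. (w,v)\<in>r \<longrightarrow> Poly_Mapping.lookup a w = Poly_Mapping.lookup c w"
      proof (intro ballI impI)
        fix w assume w: "w\<in>V" "(w,v)\<in>r"
        then have "(w,u)\<in>r" using rtr 3 by blast
        then show "Poly_Mapping.lookup a w = Poly_Mapping.lookup c w" using u(3) v(3) w by simp
      qed
      moreover have "deg a = deg c" using True by simp
      ultimately show ?thesis using v(1) unfolding drl_greater_def by blast
    qed
  qed
qed

lemma gt_asym: "gt a b \<Longrightarrow> \<not> gt b a"
  using gt_trans gt_irrefl by blast

lemma gt_total:
  assumes "Poly_Mapping.keys a \<subseteq> V" "Poly_Mapping.keys b \<subseteq> V" "a \<noteq> b"
  shows "gt a b \<or> gt b a"
proof (cases "deg a = deg b")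
  case False then show ?thesis unfolding drl_greater_def by auto
next
  case True
  let ?D = "{v\<in>V. Poly_Mapping.lookup a v \<noteq> Poly_Mapping.lookup b v}"
  have "?D \<noteq> {}"
  proof
    assume "?D = {}"
    have "Poly_Mapping.lookup a v = Poly_Mapping.lookup b v" for v
    proof (cases "v \<in> V")
      case True then show ?thesis using \<open>?D = {}\<close> by blast
    next
      case False then show ?thesis using assms(1,2) by (metis in_keys_iff subsetD)
    qed
    then show False using assms(3) poly_mapping_eqI by blast
  qed
  then obtain \<mu> where mu: "\<mu> \<in> ?D" "\<forall>z\<in>?D. z \<noteq> \<mu> \<longrightarrow> (\<mu>,z) \<in> r"
    using min_exists[of ?D] finV by auto
  have eq: "\<forall>w\<in>V. (w, \<mu>) \<in> r \<longrightarrow> Poly_Mapping.lookup a w = Poly_Mapping.lookup b w"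
    using mu rtr rirr by (metis (mono_tags, lifting) mem_Collect_eq)
  show ?thesis
  proof (cases "Poly_Mapping.lookup a \<mu> < Poly_Mapping.lookup b \<mu>")
    case True
    then show ?thesis using mu eq \<open>deg a = deg b\<close> unfolding drl_greater_def by blast
  next
    case False
    then have "Poly_Mapping.lookup b \<mu> < Poly_Mapping.lookup a \<mu>" using mu by auto
    then show ?thesis using mu eq \<open>deg a = deg b\<close> unfolding drl_greater_def by fastforce
  qed
qed

lemma gt_add_iff: "gt (t + a) (t + b) \<longleftrightarrow> gt a b"
  unfolding drl_greater_def by (simp add: deg_add lookup_add)

lemma gt_deg: "gt a b \<Longrightarrow> deg b \<le> deg a"
  unfolding drl_greater_def by auto

end


lemma poly_sum_single: "p = (\<Sum>t\<in>Poly_Mapping.keys p. Poly_Mapping.single t (Poly_Mapping.lookup p t))"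
proof (rule poly_mapping_eqI)
  fix k
  show "Poly_Mapping.lookup p k = Poly_Mapping.lookup (\<Sum>t\<in>Poly_Mapping.keys p. Poly_Mapping.single t (Poly_Mapping.lookup p t)) k"
    by (cases "k \<in> Poly_Mapping.keys p")
       (simp_all add: lookup_sum lookup_single when_def in_keys_iff)
qed

lemma lookup_single_mult:
  fixes t k :: mon and g :: cpoly
  shows "Poly_Mapping.lookup (Poly_Mapping.single t a * g) (t + k) = a * Poly_Mapping.lookup g k"
proof -
  have "Poly_Mapping.single t a * g = (\<Sum>j\<in>Poly_Mapping.keys g. Poly_Mapping.single t a * Poly_Mapping.single j (Poly_Mapping.lookup g j))"
    by (subst poly_sum_single[of g]) (simp add: sum_distrib_left)
  also have "\<dots> = (\<Sum>j\<in>Poly_Mapping.keys g. Poly_Mapping.single (t + j) (a * Poly_Mapping.lookup g j))"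
    by (simp add: mult_single)
  finally have "Poly_Mapping.lookup (Poly_Mapping.single t a * g) (t + k) =
     (\<Sum>j\<in>Poly_Mapping.keys g. (a * Poly_Mapping.lookup g j) when (t + j = t + k))"
    by (simp add: lookup_sum lookup_single)
  also have "\<dots> = (\<Sum>j\<in>Poly_Mapping.keys g. (a * Poly_Mapping.lookup g j) when (j = k))"
    by (intro sum.cong refl) (auto simp: when_def dest: add_left_imp_eq)
  also have "\<dots> = a * Poly_Mapping.lookup g k"
    by (cases "k \<in> Poly_Mapping.keys g") (simp_all add: when_def in_keys_iff)
  finally show ?thesis .
qed

lemma keys_single_mult:
  "Poly_Mapping.keys (Poly_Mapping.single t a * g) \<subseteq> (+) t ` Poly_Mapping.keys g"
  using keys_mult[of "Poly_Mapping.single t a" g] by (auto split: if_splits)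

context mo begin

abbreviation geq where "geq d m \<equiv> (m = d \<or> gt d m)"

lemma finite_bounded: "finite {b::mon. Poly_Mapping.keys b \<subseteq> V \<and> deg b \<le> d}"
proof -
  let ?A = "{b::mon. Poly_Mapping.keys b \<subseteq> V \<and> deg b \<le> d}"
  let ?f = "\<lambda>b::mon. restrict (Poly_Mapping.lookup b) V"
  have "?f ` ?A \<subseteq> (\<Pi>\<^sub>E v\<in>V. {..d})"
  proof
    fix x assume "x \<in> ?f ` ?A"
    then obtain b where b: "b \<in> ?A" "x = ?f b" by blast
    have "Poly_Mapping.lookup b v \<le> d" for v using lookup_le_deg[of b v] b(1) by simp
    then show "x \<in> (\<Pi>\<^sub>E v\<in>V. {..d})" using b(2) by auto
  qed
  moreover have "finite (\<Pi>\<^sub>E v\<in>V. {..d})" by (rule finite_PiE[OF finV]) simp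
  ultimately have "finite (?f ` ?A)" by (rule finite_subset)
  moreover have "inj_on ?f ?A"
  proof (rule inj_onI)
    fix a b assume ab: "a \<in> ?A" "b \<in> ?A" "?f a = ?f b"
    show "a = b"
    proof (rule poly_mapping_eqI)
      fix v show "Poly_Mapping.lookup a v = Poly_Mapping.lookup b v"
      proof (cases "v \<in> V")
        case True then show ?thesis using ab(3) by (metis restrict_apply')
      next
        case False then show ?thesis using ab(1,2) by (metis (no_types, lifting) in_keys_iff mem_Collect_eq subsetD)
      qed
    qed
  qed
  ultimately show ?thesis using finite_imageD by blast
qed

definition GR where "GR = {(b,a). Poly_Mapping.keys a \<subseteq> V \<and> Poly_Mapping.keys b \<subseteq> V \<and> gt a b}"

lemma wf_GR: "wf GR"
proof (rule wf_finite_segments)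
  show "irrefl GR" unfolding GR_def irrefl_def using gt_irrefl by blast
  show "trans GR" unfolding GR_def trans_def using gt_trans by blast
  fix a
  have "{b. (b,a) \<in> GR} \<subseteq> {b::mon. Poly_Mapping.keys b \<subseteq> V \<and> deg b \<le> deg a}"
    unfolding GR_def using gt_deg by blast
  then show "finite {b. (b,a) \<in> GR}" using finite_bounded finite_subset by blast
qed

lemma max_exists:
  assumes "finite A" "A \<noteq> {}" "\<forall>a\<in>A. Poly_Mapping.keys a \<subseteq> V"
  shows "\<exists>\<mu>\<in>A. \<forall>z\<in>A. z \<noteq> \<mu> \<longrightarrow> gt \<mu> z"
  using assms
proof (induction A rule: finite_ne_induct)
  case (singleton x) then show ?case by auto
next
  case (insert x F)
  then obtain \<mu> where mu: "\<mu>\<in>F" "\<forall>z\<in>F. z \<noteq> \<mu> \<longrightarrow> gt \<mu> z" by auto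
  have "x \<noteq> \<mu>" using insert mu by auto
  then have "gt x \<mu> \<or> gt \<mu> x" using gt_total insert.prems mu by blast
  then show ?case
  proof
    assume "gt x \<mu>"
    show ?thesis
    proof (intro bexI[of _ x] ballI impI)
      fix z assume "z \<in> insert x F" "z \<noteq> x"
      then have "z \<in> F" by simp
      then show "gt x z" using mu \<open>gt x \<mu>\<close> gt_trans by metis
    qed simp
  next
    assume "gt \<mu> x"
    then show ?thesis using mu by (intro bexI[of _ \<mu>]) auto
  qed
qed

lemma init_eq:
  assumes "a \<in> Poly_Mapping.keys f" "\<forall>b\<in>Poly_Mapping.keys f. b \<noteq> a \<longrightarrow> gt a b"
  shows "init_mon V r f = a"
  unfolding init_mon_def
proof (rule the_equality)
  show "a \<in> Poly_Mapping.keys f \<and> (\<forall>b\<in>Poly_Mapping.keys f. b \<noteq> a \<longrightarrow> gt a b)" using assms by blast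
  fix a' assume a': "a' \<in> Poly_Mapping.keys f \<and> (\<forall>b\<in>Poly_Mapping.keys f. b \<noteq> a' \<longrightarrow> gt a' b)"
  show "a' = a"
  proof (rule ccontr)
    assume "a' \<noteq> a"
    then have "gt a a'" "gt a' a" using assms a' by auto
    then show False using gt_asym by blast
  qed
qed

lemma init_char:
  assumes "f \<in> polys V" "f \<noteq> 0"
  shows "init_mon V r f \<in> Poly_Mapping.keys f \<and>
         (\<forall>b\<in>Poly_Mapping.keys f. b \<noteq> init_mon V r f \<longrightarrow> gt (init_mon V r f) b)"
proof -
  obtain \<mu> where "\<mu>\<in>Poly_Mapping.keys f" "\<forall>z\<in>Poly_Mapping.keys f. z \<noteq> \<mu> \<longrightarrow> gt \<mu> z"
    using max_exists[of "Poly_Mapping.keys f"] assms unfolding polys_def by auto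
  then show ?thesis using init_eq by simp
qed

end


inductive rep :: "var set \<Rightarrow> cpoly set \<Rightarrow> (mon \<Rightarrow> bool) \<Rightarrow> cpoly \<Rightarrow> bool" for V G P where
  rep0: "rep V G P 0"
| repS: "rep V G P f \<Longrightarrow> g \<in> G \<Longrightarrow> Poly_Mapping.keys t \<subseteq> V \<Longrightarrow> (\<forall>k\<in>Poly_Mapping.keys g. P (t + k))
         \<Longrightarrow> rep V G P (f + Poly_Mapping.single t a * g)"

lemma rep_term: "g \<in> G \<Longrightarrow> Poly_Mapping.keys t \<subseteq> V \<Longrightarrow> (\<forall>k\<in>Poly_Mapping.keys g. P (t + k))
         \<Longrightarrow> rep V G P (Poly_Mapping.single t a * g)"
  using rep.repS[OF rep.rep0, where g=g and t=t and a=a and P=P and V=V and G=G] by simp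

lemma rep_add: "rep V G P h \<Longrightarrow> rep V G P f \<Longrightarrow> rep V G P (f + h)"
proof (induction h rule: rep.induct)
  case rep0 then show ?case by simp
next
  case (repS h g t a)
  then have "rep V G P ((f + h) + Poly_Mapping.single t a * g)" using rep.repS by blast
  then show ?case by (simp add: add.assoc)
qed

lemma rep_smult: "rep V G P f \<Longrightarrow> rep V G P (Poly_Mapping.single 0 c * f)"
proof (induction f rule: rep.induct)
  case rep0 then show ?case by (simp add: rep.rep0)
next
  case (repS f g t a)
  have "Poly_Mapping.single 0 c * (f + Poly_Mapping.single t a * g) =
        Poly_Mapping.single 0 c * f + Poly_Mapping.single t (c * a) * g"
  proof -
    have "Poly_Mapping.single 0 c * (f + Poly_Mapping.single t a * g) =
        Poly_Mapping.single 0 c * f + (Poly_Mapping.single 0 c * Poly_Mapping.single t a) * g"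
      by (simp add: distrib_left mult.assoc)
    then show ?thesis by (simp add: mult_single)
  qed
  then show ?case using repS rep.repS by metis
qed

lemma rep_uminus: "rep V G P f \<Longrightarrow> rep V G P (- f)"
  using rep_smult[of V G P f "-1"] by (simp add: single_uminus)

lemma rep_diff: "rep V G P f \<Longrightarrow> rep V G P h \<Longrightarrow> rep V G P (f - h)"
  using rep_add[OF rep_uminus[of V G P h] ] by (simp add: algebra_simps)

lemma rep_mono:
  assumes "rep V G P f" "\<And>m. P m \<Longrightarrow> Q m" shows "rep V G Q f"
  using assms(1)
proof (induction f rule: rep.induct)
  case rep0 show ?case by (rule rep.rep0)
next
  case (repS f g t a)
  have "\<forall>k\<in>Poly_Mapping.keys g. Q (t + k)" using repS.hyps(4) assms(2) by blast
  then show ?case using rep.repS[of V G Q f g t a] repS.IH repS.hyps(2,3) by blast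
qed

lemma rep_keys:
  assumes "rep V G P f" shows "\<forall>k\<in>Poly_Mapping.keys f. P k"
  using assms
proof (induction f rule: rep.induct)
  case rep0 then show ?case by simp
next
  case (repS f g t a)
  show ?case
  proof
    fix k assume "k \<in> Poly_Mapping.keys (f + Poly_Mapping.single t a * g)"
    then have "k \<in> Poly_Mapping.keys f \<or> k \<in> Poly_Mapping.keys (Poly_Mapping.single t a * g)"
      using keys_add[of f "Poly_Mapping.single t a * g"] by blast
    then show "P k"
    proof
      assume "k \<in> Poly_Mapping.keys f" then show ?thesis using repS.IH by blast
    next
      assume "k \<in> Poly_Mapping.keys (Poly_Mapping.single t a * g)"
      then obtain j where "j \<in> Poly_Mapping.keys g" "k = t + j" using keys_single_mult[of t a g] by blast
      then show ?thesis using repS.hyps(4) by blast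
    qed
  qed
qed

lemma rep_polys:
  assumes "G \<subseteq> polys V" "rep V G P f" shows "f \<in> polys V"
  using assms(2)
proof (induction f rule: rep.induct)
  case rep0 then show ?case by (simp add: polys_def)
next
  case (repS f g t a)
  show ?case unfolding polys_def
  proof (intro CollectI ballI)
    fix m assume "m \<in> Poly_Mapping.keys (f + Poly_Mapping.single t a * g)"
    then have "m \<in> Poly_Mapping.keys f \<or> m \<in> Poly_Mapping.keys (Poly_Mapping.single t a * g)"
      using keys_add[of f "Poly_Mapping.single t a * g"] by blast
    then show "Poly_Mapping.keys m \<subseteq> V"
    proof
      assume "m \<in> Poly_Mapping.keys f" then show ?thesis using repS unfolding polys_def by blast
    next
      assume "m \<in> Poly_Mapping.keys (Poly_Mapping.single t a * g)"
      then obtain k where k: "k \<in> Poly_Mapping.keys g" "m = t + k" using keys_single_mult[of t a g] by blast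
      have "g \<in> polys V" using repS.hyps(2) assms(1) by blast
      then have "Poly_Mapping.keys k \<subseteq> V" using k unfolding polys_def by blast
      then show ?thesis using k repS.hyps(3) keys_add[of t k] by blast
    qed
  qed
qed

locale gbl = mo +
  fixes G :: "cpoly set"
  assumes GV: "G \<subseteq> polys V"
  assumes Shyp: "\<And>g h t s d. g\<in>G \<Longrightarrow> h\<in>G \<Longrightarrow> g\<noteq>0 \<Longrightarrow> h\<noteq>0 \<Longrightarrow> Poly_Mapping.keys t \<subseteq> V \<Longrightarrow>
     Poly_Mapping.keys s \<subseteq> V \<Longrightarrow> t + init_mon V r g = d \<Longrightarrow> s + init_mon V r h = d \<Longrightarrow>
     rep V G (gt d) (Poly_Mapping.single t (1 / Poly_Mapping.lookup g (init_mon V r g)) * g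
                    - Poly_Mapping.single s (1 / Poly_Mapping.lookup h (init_mon V r h)) * h)"
begin

abbreviation "inm \<equiv> init_mon V r"
abbreviation "lc g \<equiv> Poly_Mapping.lookup g (inm g)"

lemma G_init: "g \<in> G \<Longrightarrow> g \<noteq> 0 \<Longrightarrow> inm g \<in> Poly_Mapping.keys g \<and>
   (\<forall>b\<in>Poly_Mapping.keys g. b \<noteq> inm g \<longrightarrow> gt (inm g) b)"
  using init_char GV by blast

lemma G_inm_V: "g \<in> G \<Longrightarrow> g \<noteq> 0 \<Longrightarrow> Poly_Mapping.keys (inm g) \<subseteq> V"
  using G_init GV unfolding polys_def by blast

lemma G_le:
  assumes "g \<in> G" "g \<noteq> 0" shows "\<forall>k\<in>Poly_Mapping.keys g. geq (t + inm g) (t + k)"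
proof
  fix k assume k: "k \<in> Poly_Mapping.keys g"
  show "geq (t + inm g) (t + k)"
  proof (cases "k = inm g")
    case True then show ?thesis by simp
  next
    case False then have "gt (inm g) k" using G_init[OF assms] k by blast
    then show ?thesis by (simp add: gt_add_iff)
  qed
qed

lemma lc_nz: "g \<in> G \<Longrightarrow> g \<noteq> 0 \<Longrightarrow> lc g \<noteq> 0"
  using G_init by (simp add: in_keys_iff)

definition Dprop where
  "Dprop d f \<longleftrightarrow> (\<exists>c t0 g0. g0\<in>G \<and> g0\<noteq>0 \<and> Poly_Mapping.keys t0 \<subseteq> V \<and> t0 + inm g0 = d \<and>
            rep V G (gt d) (f - Poly_Mapping.single t0 c * g0))"

lemma Dlem:
  assumes "rep V G (geq d) f"
  shows "rep V G (gt d) f \<or> Dprop d f"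
  using assms
proof (induction f rule: rep.induct)
  case rep0 then show ?case by (simp add: rep.rep0)
next
  case (repS f g t a)
  let ?T = "Poly_Mapping.single t a * g"
  show ?case
  proof (cases "g = 0")
    case True then show ?thesis using repS.IH by simp
  next
    case False
    note gi = G_init[OF repS.hyps(2) False]
    have top: "geq d (t + inm g)" using bspec[OF repS.hyps(4) conjunct1[OF gi]] .
    show ?thesis
    proof (cases "t + inm g = d")
      case False
      then have gtd: "gt d (t + inm g)" using top by simp
      have "\<forall>k\<in>Poly_Mapping.keys g. gt d (t + k)"
      proof
        fix k assume k: "k \<in> Poly_Mapping.keys g"
        show "gt d (t + k)"
        proof (cases "k = inm g")
          case True then show ?thesis using gtd by simp
        next
          case False then have "gt (inm g) k" using gi k by blast
          then have "gt (t + inm g) (t + k)" by (simp add: gt_add_iff)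
          then show ?thesis using gt_trans[OF gtd] by blast
        qed
      qed
      then have rT: "rep V G (gt d) ?T" using rep_term[OF repS.hyps(2,3)] by blast
      from repS.IH show ?thesis
      proof
        assume "rep V G (gt d) f" then show ?thesis using rep_add[OF rT] by blast
      next
        assume "Dprop d f"
        then obtain c t0 g0 where *: "g0\<in>G" "g0\<noteq>0" "Poly_Mapping.keys t0 \<subseteq> V" "t0 + inm g0 = d"
            "rep V G (gt d) (f - Poly_Mapping.single t0 c * g0)" unfolding Dprop_def by blast
        have "rep V G (gt d) ((f - Poly_Mapping.single t0 c * g0) + ?T)" using rep_add[OF rT *(5)] .
        moreover have "(f - Poly_Mapping.single t0 c * g0) + ?T = (f + ?T) - Poly_Mapping.single t0 c * g0"
          by (simp add: algebra_simps)
        ultimately have "rep V G (gt d) ((f + ?T) - Poly_Mapping.single t0 c * g0)" by simp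
        then have "Dprop d (f + ?T)" unfolding Dprop_def using *(1-4) by blast
        then show ?thesis by blast
      qed
    next
      case True
      from repS.IH show ?thesis
      proof
        assume "rep V G (gt d) f"
        moreover have "f + ?T - Poly_Mapping.single t a * g = f" by simp
        ultimately have "rep V G (gt d) (f + ?T - Poly_Mapping.single t a * g)" by simp
        then have "Dprop d (f + ?T)" unfolding Dprop_def using True repS.hyps(2,3) False by blast
        then show ?thesis by blast
      next
        assume "Dprop d f"
        then obtain c t0 g0 where *: "g0\<in>G" "g0\<noteq>0" "Poly_Mapping.keys t0 \<subseteq> V" "t0 + inm g0 = d"
            "rep V G (gt d) (f - Poly_Mapping.single t0 c * g0)" unfolding Dprop_def by blast
        have lg: "lc g \<noteq> 0" using lc_nz[OF repS.hyps(2) False] .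
        let ?X = "Poly_Mapping.single 0 (a * lc g)"
        let ?S = "Poly_Mapping.single t (1 / lc g) * g - Poly_Mapping.single t0 (1 / lc g0) * g0"
        have rS: "rep V G (gt d) ?S" using Shyp[OF repS.hyps(2) *(1) False *(2) repS.hyps(3) *(3) True *(4)] .
        have e1: "?X * Poly_Mapping.single t (1 / lc g) = Poly_Mapping.single t a"
          using lg by (simp add: mult_single)
        have e2: "?X * Poly_Mapping.single t0 (1 / lc g0) = Poly_Mapping.single t0 (a * lc g / lc g0)"
          by (simp add: mult_single)
        have e3: "Poly_Mapping.single t0 (c + a * lc g / lc g0) = Poly_Mapping.single t0 c + Poly_Mapping.single t0 (a * lc g / lc g0)"
          by (rule single_add)
        have eq: "(f - Poly_Mapping.single t0 c * g0) + ?X * ?S = (f + ?T) - Poly_Mapping.single t0 (c + a * lc g / lc g0) * g0"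
          unfolding e3 right_diff_distrib mult.assoc[symmetric] e1 e2 by (simp add: algebra_simps)
        have "rep V G (gt d) ((f - Poly_Mapping.single t0 c * g0) + ?X * ?S)"
          using rep_add[OF rep_smult[OF rS] *(5)] .
        then have "rep V G (gt d) ((f + ?T) - Poly_Mapping.single t0 (c + a * lc g / lc g0) * g0)"
          unfolding eq .
        then have "Dprop d (f + ?T)" unfolding Dprop_def using *(1-4) by blast
        then show ?thesis by blast
      qed
    qed
  qed
qed

lemma Elem:
  assumes "rep V G (gt d) f"
  shows "f = 0 \<or> (\<exists>d'. Poly_Mapping.keys d' \<subseteq> V \<and> gt d d' \<and> rep V G (geq d') f)"
  using assms
proof (induction f rule: rep.induct)
  case rep0 then show ?case by simp
next
  case (repS f g t a)
  let ?T = "Poly_Mapping.single t a * g"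
  show ?case
  proof (cases "g = 0")
    case True then show ?thesis using repS.IH by simp
  next
    case False
    note gi = G_init[OF repS.hyps(2) False]
    let ?d1 = "t + inm g"
    have d1V: "Poly_Mapping.keys ?d1 \<subseteq> V"
      using G_inm_V[OF repS.hyps(2) False] repS.hyps(3) keys_add[of t "inm g"] by blast
    have gd1: "gt d ?d1" using bspec[OF repS.hyps(4) conjunct1[OF gi]] .
    have "\<forall>k\<in>Poly_Mapping.keys g. geq ?d1 (t + k)" using G_le[OF repS.hyps(2) False] by blast
    then have rT: "rep V G (geq ?d1) ?T" by (rule rep_term[OF repS.hyps(2,3)])
    from repS.IH show ?thesis
    proof
      assume "f = 0"
      then have "rep V G (geq ?d1) (f + ?T)" using rT by simp
      then show ?thesis using d1V gd1 by blast
    next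
      assume "\<exists>d'. Poly_Mapping.keys d' \<subseteq> V \<and> gt d d' \<and> rep V G (geq d') f"
      then obtain d' where d': "Poly_Mapping.keys d' \<subseteq> V" "gt d d'" "rep V G (geq d') f" by blast
      show ?thesis
      proof (cases "geq d' ?d1")
        case True
        have "rep V G (geq d') ?T"
        proof (rule rep_mono[OF rT])
          fix m assume "geq ?d1 m" then show "geq d' m" using True gt_trans by metis
        qed
        then have "rep V G (geq d') (f + ?T)" using rep_add[OF _ d'(3)] by blast
        then show ?thesis using d'(1,2) by blast
      next
        case False
        then have "gt ?d1 d'" using gt_total[OF d1V d'(1)] by blast
        then have "rep V G (geq ?d1) f"
        proof (intro rep_mono[OF d'(3)])
          fix m assume "gt ?d1 d'" "geq d' m" then show "geq ?d1 m" using gt_trans by metis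
        qed
        then have "rep V G (geq ?d1) (f + ?T)" using rep_add[OF rT] by blast
        then show ?thesis using d1V gd1 by blast
      qed
    qed
  qed
qed

lemma Main:
  assumes "Poly_Mapping.keys d \<subseteq> V" "rep V G (geq d) f" "f \<noteq> 0"
  shows "\<exists>g\<in>G. g \<noteq> 0 \<and> (\<exists>t. Poly_Mapping.keys t \<subseteq> V \<and> inm f = t + inm g)"
  using assms
proof (induction d arbitrary: f rule: wf_induct[OF wf_GR])
  case (1 d)
  have IH: "\<And>d' f. Poly_Mapping.keys d' \<subseteq> V \<Longrightarrow> gt d d' \<Longrightarrow> rep V G (geq d') f \<Longrightarrow> f \<noteq> 0 \<Longrightarrow>
     \<exists>g\<in>G. g \<noteq> 0 \<and> (\<exists>t. Poly_Mapping.keys t \<subseteq> V \<and> inm f = t + inm g)"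
  proof -
    fix d' f assume "Poly_Mapping.keys d' \<subseteq> V" "gt d d'" "rep V G (geq d') f" "f \<noteq> 0"
    moreover have "(d', d) \<in> GR" unfolding GR_def using 1(2) calculation by blast
    ultimately show "\<exists>g\<in>G. g \<noteq> 0 \<and> (\<exists>t. Poly_Mapping.keys t \<subseteq> V \<and> inm f = t + inm g)"
      using 1(1) by blast
  qed
  have viaE: "\<exists>g\<in>G. g \<noteq> 0 \<and> (\<exists>t. Poly_Mapping.keys t \<subseteq> V \<and> inm h = t + inm g)"
    if "rep V G (gt d) h" "h \<noteq> 0" for h
  proof -
    have "\<exists>d'. Poly_Mapping.keys d' \<subseteq> V \<and> gt d d' \<and> rep V G (geq d') h"
      using Elem[OF that(1)] that(2) by simp
    then obtain d' where "Poly_Mapping.keys d' \<subseteq> V" "gt d d'" "rep V G (geq d') h"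
      by blast
    then show ?thesis using IH that(2) by blast
  qed
  from Dlem[OF 1(3)] show ?case
  proof
    assume "rep V G (gt d) f" then show ?thesis using viaE 1(4) by blast
  next
    assume "Dprop d f"
    then obtain c t0 g0 where *: "g0\<in>G" "g0\<noteq>0" "Poly_Mapping.keys t0 \<subseteq> V" "t0 + inm g0 = d"
            "rep V G (gt d) (f - Poly_Mapping.single t0 c * g0)" unfolding Dprop_def by blast
    show ?thesis
    proof (cases "c = 0")
      case True then show ?thesis using viaE[OF *(5)] 1(4) by simp
    next
      case False
      let ?R = "f - Poly_Mapping.single t0 c * g0"
      have "d \<notin> Poly_Mapping.keys ?R" using rep_keys[OF *(5)] gt_irrefl by blast
      then have R0: "Poly_Mapping.lookup ?R d = 0" by (simp add: in_keys_iff)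
      have "Poly_Mapping.lookup (Poly_Mapping.single t0 c * g0) d = c * lc g0"
        using lookup_single_mult[of t0 c g0 "inm g0"] *(4) by simp
      then have "Poly_Mapping.lookup f d = c * lc g0" using R0 by (simp add: lookup_minus)
      then have dk: "d \<in> Poly_Mapping.keys f" using False lc_nz[OF *(1,2)] by (simp add: in_keys_iff)
      have "\<forall>b\<in>Poly_Mapping.keys f. b \<noteq> d \<longrightarrow> gt d b" using rep_keys[OF 1(3)] by blast
      then have "inm f = d" using init_eq dk by blast
      then have "inm f = t0 + inm g0" using *(4) by simp
      then show ?thesis using *(1-3) by blast
    qed
  qed
qed

lemma rep_exists_term:
  assumes "g \<in> G" "Poly_Mapping.keys t \<subseteq> V"
  shows "\<exists>d. Poly_Mapping.keys d \<subseteq> V \<and> rep V G (geq d) (Poly_Mapping.single t a * g)"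
proof (cases "g = 0")
  case True then show ?thesis using rep.rep0 by (intro exI[of _ 0]) auto
next
  case False
  note gi = G_init[OF assms(1) False]
  have kV: "Poly_Mapping.keys (t + inm g) \<subseteq> V"
    using G_inm_V[OF assms(1) False] assms(2) keys_add[of t "inm g"] by blast
  have "\<forall>k\<in>Poly_Mapping.keys g. geq (t + inm g) (t + k)" using G_le[OF assms(1) False] by blast
  then have "rep V G (geq (t + inm g)) (Poly_Mapping.single t a * g)" by (rule rep_term[OF assms])
  then have "Poly_Mapping.keys (t + inm g) \<subseteq> V \<and> rep V G (geq (t + inm g)) (Poly_Mapping.single t a * g)"
    using kV by blast
  then show ?thesis by (rule exI[of _ "t + inm g"])
qed

lemma rep_exists_add:
  assumes "Poly_Mapping.keys d1 \<subseteq> V" "rep V G (geq d1) f1" "Poly_Mapping.keys d2 \<subseteq> V" "rep V G (geq d2) f2"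
  shows "\<exists>d. Poly_Mapping.keys d \<subseteq> V \<and> rep V G (geq d) (f1 + f2)"
proof (cases "geq d1 d2")
  case True
  then have "rep V G (geq d1) f2"
  proof (intro rep_mono[OF assms(4)])
    fix m assume "geq d1 d2" "geq d2 m" then show "geq d1 m" using gt_trans by metis
  qed
  then have "rep V G (geq d1) (f1 + f2)" by (rule rep_add[OF _ assms(2)])
  then have "Poly_Mapping.keys d1 \<subseteq> V \<and> rep V G (geq d1) (f1 + f2)" using assms(1) by blast
  then show ?thesis by (rule exI[of _ d1])
next
  case False
  then have "gt d2 d1" using gt_total[OF assms(1,3)] by blast
  then have "rep V G (geq d2) f1"
  proof (intro rep_mono[OF assms(2)])
    fix m assume "gt d2 d1" "geq d1 m" then show "geq d2 m" using gt_trans by metis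
  qed
  then have "rep V G (geq d2) (f1 + f2)" by (rule rep_add[OF assms(4)])
  then have "Poly_Mapping.keys d2 \<subseteq> V \<and> rep V G (geq d2) (f1 + f2)" using assms(3) by blast
  then show ?thesis by (rule exI[of _ d2])
qed

lemma rep_exists_sum:
  assumes "finite A" "\<forall>x\<in>A. \<exists>d. Poly_Mapping.keys d \<subseteq> V \<and> rep V G (geq d) (F x)"
  shows "\<exists>d. Poly_Mapping.keys d \<subseteq> V \<and> rep V G (geq d) (sum F A)"
  using assms
proof (induction A rule: finite_induct)
  case empty then show ?case using rep.rep0 by (intro exI[of _ 0]) auto
next
  case (insert x A)
  then obtain d1 d2 where "Poly_Mapping.keys d1 \<subseteq> V" "rep V G (geq d1) (F x)"
     "Poly_Mapping.keys d2 \<subseteq> V" "rep V G (geq d2) (sum F A)" by auto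
  then have "\<exists>d. Poly_Mapping.keys d \<subseteq> V \<and> rep V G (geq d) (F x + sum F A)"
    by (rule rep_exists_add)
  moreover have "sum F (insert x A) = F x + sum F A" using insert.hyps by simp
  ultimately show ?case by (simp only:)
qed

lemma rep_exists_ideal:
  assumes "f \<in> ideal_gen V G"
  shows "\<exists>d. Poly_Mapping.keys d \<subseteq> V \<and> rep V G (geq d) f"
proof -
  obtain S c where Sc: "finite S" "S \<subseteq> G" "\<forall>g\<in>S. c g \<in> polys V" "f = (\<Sum>g\<in>S. c g * g)"
    using assms unfolding ideal_gen_def by blast
  have "\<exists>d. Poly_Mapping.keys d \<subseteq> V \<and> rep V G (geq d) (c g * g)" if g: "g \<in> S" for g
  proof -
    have "c g * g = (\<Sum>t\<in>Poly_Mapping.keys (c g). Poly_Mapping.single t (Poly_Mapping.lookup (c g) t) * g)"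
      by (subst poly_sum_single[of "c g"]) (simp add: sum_distrib_right)
    moreover have "\<exists>d. Poly_Mapping.keys d \<subseteq> V \<and> rep V G (geq d) (Poly_Mapping.single t (Poly_Mapping.lookup (c g) t) * g)"
      if "t \<in> Poly_Mapping.keys (c g)" for t
    proof -
      have tV: "Poly_Mapping.keys t \<subseteq> V" using Sc(3) g that unfolding polys_def by blast
      have gG: "g \<in> G" using g Sc(2) by blast
      show ?thesis by (rule rep_exists_term[OF gG tV])
    qed
    ultimately show ?thesis using rep_exists_sum[of "Poly_Mapping.keys (c g)"] by simp
  qed
  then have "\<forall>g\<in>S. \<exists>d. Poly_Mapping.keys d \<subseteq> V \<and> rep V G (geq d) (c g * g)" by blast
  then have "\<exists>d. Poly_Mapping.keys d \<subseteq> V \<and> rep V G (geq d) (\<Sum>g\<in>S. c g * g)"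
    by (rule rep_exists_sum[OF Sc(1)])
  then show ?thesis unfolding Sc(4) .
qed

theorem gb_core:
  assumes "f \<in> ideal_gen V G" "f \<noteq> 0"
  shows "\<exists>g\<in>G. g \<noteq> 0 \<and> (\<exists>t. Poly_Mapping.keys t \<subseteq> V \<and> inm f = t + inm g)"
proof -
  obtain d where "Poly_Mapping.keys d \<subseteq> V" "rep V G (geq d) f" using rep_exists_ideal[OF assms(1)] by blast
  then show ?thesis using Main[OF _ _ assms(2)] by blast
qed

end


definition sv :: "var \<Rightarrow> mon" where "sv v = Poly_Mapping.single v 1"

definition Mm :: "var set \<Rightarrow> nat \<Rightarrow> nat \<Rightarrow> nat \<Rightarrow> nat \<Rightarrow> cpoly" where
  "Mm Z a b c d = Xmat Z a c * Xmat Z b d - Xmat Z a d * Xmat Z b c"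

lemma lookup_sv [simp]: "Poly_Mapping.lookup (sv v) w = (if v = w then 1 else 0)"
  by (simp add: sv_def lookup_single when_def)

lemma keys_sv [simp]: "Poly_Mapping.keys (sv v) = {v}"
  by (simp add: sv_def)

lemma Var_sv: "Var v = Poly_Mapping.single (sv v) 1"
  by (simp add: Var_def sv_def)

lemma XX: "Xmat Z i j * Xmat Z k l =
  (if (i,j) \<in> Z \<or> (k,l) \<in> Z then 0 else Poly_Mapping.single (sv (i,j) + sv (k,l)) 1)"
  by (simp add: Xmat_def Var_sv mult_single)

lemma Mm_swap: "Mm Z b a d c = Mm Z a b c d"
  by (simp add: Mm_def mult.commute)

lemma Mm_neg1: "Mm Z a b d c = - Mm Z a b c d"
  by (simp add: Mm_def)

lemma Mm_neg2: "Mm Z b a c d = - Mm Z a b c d"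
  by (simp add: Mm_def mult.commute)

lemma keys_Mm:
  assumes "k \<in> Poly_Mapping.keys (Mm Z a b c d)"
  shows "((a,c)\<notin>Z \<and> (b,d)\<notin>Z \<and> k = sv (a,c) + sv (b,d)) \<or> ((a,d)\<notin>Z \<and> (b,c)\<notin>Z \<and> k = sv (a,d) + sv (b,c))"
proof -
  have "k \<in> Poly_Mapping.keys (Xmat Z a c * Xmat Z b d) \<or> k \<in> Poly_Mapping.keys (Xmat Z a d * Xmat Z b c)"
    using assms keys_diff[of "Xmat Z a c * Xmat Z b d" "Xmat Z a d * Xmat Z b c"] unfolding Mm_def by blast
  then show ?thesis unfolding XX by (auto split: if_splits)
qed

lemma sv_neq:
  assumes "a \<noteq> b" "c \<noteq> d"
  shows "sv (a,d) + sv (b,c) \<noteq> sv (a,c) + sv (b,d)"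
proof
  assume "sv (a,d) + sv (b,c) = sv (a,c) + sv (b,d)"
  then have "Poly_Mapping.lookup (sv (a,d) + sv (b,c)) (a,c) = Poly_Mapping.lookup (sv (a,c) + sv (b,d)) (a,c)"
    by simp
  then show False using assms by (simp add: lookup_add)
qed

lemma lookup_Mm_lead:
  assumes "a \<noteq> b" "c \<noteq> d" "(a,c) \<notin> Z" "(b,d) \<notin> Z"
  shows "Poly_Mapping.lookup (Mm Z a b c d) (sv (a,c) + sv (b,d)) = 1"
  using assms sv_neq[OF assms(1,2)]
  by (simp add: Mm_def XX lookup_minus lookup_single when_def)

lemma inm_neg [simp]: "init_mon V r (- f) = init_mon V r f"
  by (simp add: init_mon_def)

lemma mon_split:
  fixes t q :: mon
  assumes "\<And>v. Poly_Mapping.lookup q v \<le> Poly_Mapping.lookup t v"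
  shows "t = (t - q) + q"
  by (rule poly_mapping_eqI) (simp add: lookup_add lookup_minus assms)

lemma keys_minus_sub:
  fixes t q :: mon
  shows "Poly_Mapping.keys (t - q) \<subseteq> Poly_Mapping.keys t"
  by (auto simp: in_keys_iff lookup_minus)

lemma ring_eq_helper:
  fixes w :: mon
  shows "Poly_Mapping.single (w + sv u) (1::complex) = Poly_Mapping.single w 1 * Var u"
  by (simp add: Var_sv mult_single)

locale mz =
  fixes m n :: nat and Z :: "var set" and r :: "var rel"
  assumes slo: "strict_linear_order_on ({1..m} \<times> {1..n} - Z) r"
begin

abbreviation "VV \<equiv> {1..m} \<times> {1..n} - Z"
abbreviation "GG \<equiv> minors2 m n Z"
abbreviation "X \<equiv> Xmat Z"

sublocale mo VV r
proof
  show "finite VV" by simp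
  show "trans r" using slo unfolding strict_linear_order_on_def by blast
  show "(x,x) \<notin> r" for x using slo unfolding strict_linear_order_on_def irrefl_on_def by blast
  show "(x,y)\<in>r \<or> (y,x)\<in>r" if "x \<in> VV" "y \<in> VV" "x \<noteq> y" for x y
    using slo that unfolding strict_linear_order_on_def total_on_def by blast
qed

lemma Mm_in:
  assumes "1 \<le> i1" "i1 < i2" "i2 \<le> m" "1 \<le> j1" "j1 < j2" "j2 \<le> n"
  shows "Mm Z i1 i2 j1 j2 \<in> GG"
  unfolding minors2_def Mm_def
  apply (rule CollectI, rule exI[of _ i1], rule exI[of _ i2], rule exI[of _ j1], rule exI[of _ j2])
  using assms by simp

lemma G_cases:
  assumes "g \<in> GG"
  obtains i1 i2 j1 j2 where "g = Mm Z i1 i2 j1 j2" "1 \<le> i1" "i1 < i2" "i2 \<le> m" "1 \<le> j1" "j1 < j2" "j2 \<le> n"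
proof -
  from assms obtain i1 i2 j1 j2 where "g = Xmat Z i1 j1 * Xmat Z i2 j2 - Xmat Z i1 j2 * Xmat Z i2 j1"
    "1 \<le> i1" "i1 < i2" "i2 \<le> m" "1 \<le> j1" "j1 < j2" "j2 \<le> n"
    unfolding minors2_def by blast
  then show ?thesis using that unfolding Mm_def by blast
qed

lemma Gpm:
  assumes "a \<noteq> b" "c \<noteq> d" "a \<in> {1..m}" "b \<in> {1..m}" "c \<in> {1..n}" "d \<in> {1..n}"
  shows "Mm Z a b c d \<in> GG \<or> - Mm Z a b c d \<in> GG"
proof (cases "a < b")
  case ab: True
  show ?thesis
  proof (cases "c < d")
    case cd: True
    have "Mm Z a b c d \<in> GG" by (rule Mm_in) (use assms ab cd in simp_all)
    then show ?thesis ..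
  next
    case False then have dc: "d < c" using assms(2) by linarith
    have "Mm Z a b d c \<in> GG" by (rule Mm_in) (use assms ab dc in simp_all)
    then have "- Mm Z a b c d \<in> GG" using Mm_neg1[of Z a b d c] by simp
    then show ?thesis ..
  qed
next
  case False then have ba: "b < a" using assms(1) by linarith
  show ?thesis
  proof (cases "c < d")
    case cd: True
    have "Mm Z b a c d \<in> GG" by (rule Mm_in) (use assms ba cd in simp_all)
    then have "- Mm Z a b c d \<in> GG" using Mm_neg2[of Z b a c d] by simp
    then show ?thesis ..
  next
    case False then have dc: "d < c" using assms(2) by linarith
    have "Mm Z b a d c \<in> GG" by (rule Mm_in) (use assms ba dc in simp_all)
    then have "Mm Z a b c d \<in> GG" using Mm_swap[of Z b a d c] by simp
    then show ?thesis ..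
  qed
qed

definition LD where
  "LD a b c d \<longleftrightarrow> a \<noteq> b \<and> c \<noteq> d \<and> a \<in> {1..m} \<and> b \<in> {1..m} \<and> c \<in> {1..n} \<and> d \<in> {1..n} \<and>
     (a,c) \<notin> Z \<and> (b,d) \<notin> Z \<and>
     ((a,d) \<notin> Z \<and> (b,c) \<notin> Z \<longrightarrow> gt (sv (a,c) + sv (b,d)) (sv (a,d) + sv (b,c)))"

lemma LD_swap: "LD a b c d \<Longrightarrow> LD b a d c"
  unfolding LD_def by (simp add: add.commute conj_commute)

lemma inm_Mm:
  assumes "LD a b c d"
  shows "init_mon VV r (Mm Z a b c d) = sv (a,c) + sv (b,d)"
proof (rule init_eq)
  show "sv (a,c) + sv (b,d) \<in> Poly_Mapping.keys (Mm Z a b c d)"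
    using lookup_Mm_lead[of a b c d Z] assms unfolding LD_def by (simp add: in_keys_iff)
  show "\<forall>k\<in>Poly_Mapping.keys (Mm Z a b c d). k \<noteq> sv (a,c) + sv (b,d) \<longrightarrow> gt (sv (a,c) + sv (b,d)) k"
    using keys_Mm assms unfolding LD_def by blast
qed

lemma exLD:
  assumes "LD a b c d" "g = Mm Z a b c d \<or> g = - Mm Z a b c d"
  shows "\<exists>a b c d. LD a b c d \<and> (g = Mm Z a b c d \<or> g = - Mm Z a b c d)"
  apply (rule exI[of _ a], rule exI[of _ b], rule exI[of _ c], rule exI[of _ d])
  using assms by (rule conjI)

lemma decomp:
  assumes "g \<in> GG" "g \<noteq> 0"
  shows "\<exists>a b c d. LD a b c d \<and> (g = Mm Z a b c d \<or> g = - Mm Z a b c d)"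
proof -
  obtain i1 i2 j1 j2 where g: "g = Mm Z i1 i2 j1 j2" "1 \<le> i1" "i1 < i2" "i2 \<le> m" "1 \<le> j1" "j1 < j2" "j2 \<le> n"
    using G_cases[OF assms(1)] by blast
  show ?thesis
  proof (cases "(i1,j1) \<notin> Z \<and> (i2,j2) \<notin> Z")
    case True
    show ?thesis
    proof (cases "(i1,j2) \<notin> Z \<and> (i2,j1) \<notin> Z")
      case True2: True
      have ne: "sv (i1,j1) + sv (i2,j2) \<noteq> sv (i1,j2) + sv (i2,j1)"
        using sv_neq[of i1 i2 j1 j2] g by auto
      have V1: "Poly_Mapping.keys (sv (i1,j1) + sv (i2,j2)) \<subseteq> VV"
        using keys_add[of "sv (i1,j1)" "sv (i2,j2)"] True g by auto
      have V2: "Poly_Mapping.keys (sv (i1,j2) + sv (i2,j1)) \<subseteq> VV"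
        using keys_add[of "sv (i1,j2)" "sv (i2,j1)"] True2 g by auto
      from gt_total[OF V1 V2 ne] show ?thesis
      proof
        assume "gt (sv (i1,j1) + sv (i2,j2)) (sv (i1,j2) + sv (i2,j1))"
        then have "LD i1 i2 j1 j2" unfolding LD_def using g True by auto
        then show ?thesis by (rule exLD[OF _ disjI1[OF g(1)]])
      next
        assume "gt (sv (i1,j2) + sv (i2,j1)) (sv (i1,j1) + sv (i2,j2))"
        then have "LD i1 i2 j2 j1" unfolding LD_def using g True2 by auto
        moreover have "g = - Mm Z i1 i2 j2 j1" using g(1) Mm_neg1[of Z i1 i2 j1 j2] by simp
        ultimately show ?thesis by (rule exLD[OF _ disjI2])
      qed
    next
      case False
      then have "LD i1 i2 j1 j2" unfolding LD_def using g True by auto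
      then show ?thesis by (rule exLD[OF _ disjI1[OF g(1)]])
    qed
  next
    case False
    then have "Xmat Z i1 j1 * Xmat Z i2 j2 = 0" by (auto simp: XX)
    then have "g = - (Xmat Z i1 j2 * Xmat Z i2 j1)" using g by (simp add: Mm_def)
    then have "(i1,j2) \<notin> Z \<and> (i2,j1) \<notin> Z" using assms(2) by (auto simp: XX split: if_splits)
    then have "LD i1 i2 j2 j1" unfolding LD_def using g False by auto
    moreover have "g = - Mm Z i1 i2 j2 j1" using g(1) Mm_neg1[of Z i1 i2 j1 j2] by simp
    ultimately show ?thesis by (rule exLD[OF _ disjI2])
  qed
qed

lemma GG_polys: "GG \<subseteq> polys VV"
proof
  fix g assume "g \<in> GG"
  then obtain i1 i2 j1 j2 where g: "g = Mm Z i1 i2 j1 j2" "1 \<le> i1" "i1 < i2" "i2 \<le> m" "1 \<le> j1" "j1 < j2" "j2 \<le> n"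
    using G_cases by blast
  show "g \<in> polys VV" unfolding polys_def
  proof (intro CollectI ballI)
    fix k assume "k \<in> Poly_Mapping.keys g"
    then have "((i1,j1)\<notin>Z \<and> (i2,j2)\<notin>Z \<and> k = sv (i1,j1) + sv (i2,j2)) \<or> ((i1,j2)\<notin>Z \<and> (i2,j1)\<notin>Z \<and> k = sv (i1,j2) + sv (i2,j1))"
      using keys_Mm g(1) by blast
    then show "Poly_Mapping.keys k \<subseteq> VV"
    proof
      assume h: "(i1,j1)\<notin>Z \<and> (i2,j2)\<notin>Z \<and> k = sv (i1,j1) + sv (i2,j2)"
      then show ?thesis using keys_add[of "sv (i1,j1)" "sv (i2,j2)"] g by auto
    next
      assume h: "(i1,j2)\<notin>Z \<and> (i2,j1)\<notin>Z \<and> k = sv (i1,j2) + sv (i2,j1)"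
      then show ?thesis using keys_add[of "sv (i1,j2)" "sv (i2,j1)"] g by auto
    qed
  qed
qed

lemma GG_finite: "finite GG"
proof -
  have "GG \<subseteq> (\<lambda>(i1,i2,j1,j2). Mm Z i1 i2 j1 j2) ` ({1..m} \<times> {1..m} \<times> {1..n} \<times> {1..n})"
  proof
    fix g assume "g \<in> GG"
    then obtain i1 i2 j1 j2 where g: "g = Mm Z i1 i2 j1 j2" "1 \<le> i1" "i1 < i2" "i2 \<le> m" "1 \<le> j1" "j1 < j2" "j2 \<le> n"
      using G_cases by blast
    then show "g \<in> (\<lambda>(i1,i2,j1,j2). Mm Z i1 i2 j1 j2) ` ({1..m} \<times> {1..m} \<times> {1..n} \<times> {1..n})"
      by (intro image_eqI[of _ _ "(i1,i2,j1,j2)"]) auto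
  qed
  then show ?thesis by (rule finite_subset) simp
qed

end


lemma deg_sv [simp]: "deg (sv v) = 1"
  by (simp add: sv_def)

context mz begin

lemma gtI: "gt A B \<Longrightarrow> D1 = C + A \<Longrightarrow> D2 = C + B \<Longrightarrow> gt D1 D2"
  by (simp only: gt_add_iff)

lemma rep_M:
  assumes "a \<noteq> b" "c \<noteq> d" "a \<in> {1..m}" "b \<in> {1..m}" "c \<in> {1..n}" "d \<in> {1..n}"
    "Poly_Mapping.keys w \<subseteq> VV" "\<forall>k\<in>Poly_Mapping.keys (Mm Z a b c d). P (w + k)"
  shows "rep VV GG P (Poly_Mapping.single w \<kappa> * Mm Z a b c d)"
proof -
  from Gpm[OF assms(1-6)] show ?thesis
  proof
    assume "Mm Z a b c d \<in> GG"
    then show ?thesis by (rule rep_term[OF _ assms(7,8)])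
  next
    assume h: "- Mm Z a b c d \<in> GG"
    have k: "\<forall>k\<in>Poly_Mapping.keys (- Mm Z a b c d). P (w + k)" using assms(8) by simp
    have "rep VV GG P (Poly_Mapping.single w (- \<kappa>) * (- Mm Z a b c d))"
      by (rule rep_term[OF h assms(7) k])
    moreover have "Poly_Mapping.single w (- \<kappa>) * (- Mm Z a b c d) = Poly_Mapping.single w \<kappa> * Mm Z a b c d"
      by (simp add: single_uminus)
    ultimately show ?thesis by simp
  qed
qed

lemma rep_XM:
  assumes "a \<noteq> b" "c \<noteq> d" "a \<in> {1..m}" "b \<in> {1..m}" "c \<in> {1..n}" "d \<in> {1..n}"
    "i \<in> {1..m}" "j \<in> {1..n}" "Poly_Mapping.keys w \<subseteq> VV"
    "(i,j) \<notin> Z \<Longrightarrow> \<forall>k\<in>Poly_Mapping.keys (Mm Z a b c d). P (w + sv (i,j) + k)"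
  shows "rep VV GG P (Poly_Mapping.single w \<kappa> * X i j * Mm Z a b c d)"
proof (cases "(i,j) \<in> Z")
  case True then have "X i j = 0" by (simp add: Xmat_def)
  then show ?thesis by (simp add: rep.rep0)
next
  case False
  then have e: "Poly_Mapping.single w \<kappa> * X i j = Poly_Mapping.single (w + sv (i,j)) \<kappa>"
    by (simp add: Xmat_def Var_sv mult_single)
  have "(i,j) \<in> VV" using assms(7,8) False by simp
  then have "Poly_Mapping.keys (w + sv (i,j)) \<subseteq> VV"
    using keys_add[of w "sv (i,j)"] assms(9) by auto
  from rep_M[OF assms(1-6) this assms(10)[OF False]] show ?thesis unfolding e .
qed

lemma rep_XXM:
  assumes "a \<noteq> b" "c \<noteq> d" "a \<in> {1..m}" "b \<in> {1..m}" "c \<in> {1..n}" "d \<in> {1..n}"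
    "i \<in> {1..m}" "j \<in> {1..n}" "i' \<in> {1..m}" "j' \<in> {1..n}" "Poly_Mapping.keys w \<subseteq> VV"
    "(i,j) \<notin> Z \<Longrightarrow> (i',j') \<notin> Z \<Longrightarrow> \<forall>k\<in>Poly_Mapping.keys (Mm Z a b c d). P (w + sv (i,j) + sv (i',j') + k)"
  shows "rep VV GG P (Poly_Mapping.single w \<kappa> * X i j * X i' j' * Mm Z a b c d)"
proof (cases "(i,j) \<in> Z \<or> (i',j') \<in> Z")
  case True then have "X i j * X i' j' = 0" by (auto simp: Xmat_def)
  then have "Poly_Mapping.single w \<kappa> * X i j * X i' j' * Mm Z a b c d = 0" by (simp add: mult.assoc)
  then show ?thesis by (simp add: rep.rep0)
next
  case False
  then have e: "Poly_Mapping.single w \<kappa> * X i j * X i' j' = Poly_Mapping.single (w + sv (i,j) + sv (i',j')) \<kappa>"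
    by (simp add: Xmat_def Var_sv mult_single)
  have z: "(i,j) \<notin> Z" "(i',j') \<notin> Z" using False by auto
  have "(i,j) \<in> VV" "(i',j') \<in> VV" using assms(7-10) z by auto
  moreover have "Poly_Mapping.keys (w + sv (i,j) + sv (i',j')) \<subseteq> insert (i',j') (insert (i,j) (Poly_Mapping.keys w))"
    using keys_add[of "w + sv (i,j)" "sv (i',j')"] keys_add[of w "sv (i,j)"] by auto
  ultimately have "Poly_Mapping.keys (w + sv (i,j) + sv (i',j')) \<subseteq> VV"
    using assms(11) by blast
  from rep_M[OF assms(1-6) this assms(12)[OF z]] show ?thesis unfolding e .
qed

lemma LD_D:
  assumes "LD a b c d"
  shows "a \<noteq> b" "c \<noteq> d" "a \<in> {1..m}" "b \<in> {1..m}" "c \<in> {1..n}" "d \<in> {1..n}" "(a,c) \<notin> Z" "(b,d) \<notin> Z"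
    "(a,d) \<notin> Z \<Longrightarrow> (b,c) \<notin> Z \<Longrightarrow> gt (sv (a,c) + sv (b,d)) (sv (a,d) + sv (b,c))"
  using assms unfolding LD_def by auto

lemma keys_MmE:
  assumes "k \<in> Poly_Mapping.keys (Mm Z a b c d)"
  obtains "(a,c)\<notin>Z" "(b,d)\<notin>Z" "k = sv (a,c) + sv (b,d)" | "(a,d)\<notin>Z" "(b,c)\<notin>Z" "k = sv (a,d) + sv (b,c)"
  using keys_Mm[OF assms] by blast

lemma caseB1:
  assumes g: "LD a b c d" and h: "LD a b c d'" and dd: "d \<noteq> d'" and wV: "Poly_Mapping.keys w0 \<subseteq> VV"
    and dl: "dl = w0 + sv (b,d') + sv (a,c) + sv (b,d)"
  shows "rep VV GG (gt dl) (Poly_Mapping.single w0 1 * (Var (b,d') * Mm Z a b c d - Var (b,d) * Mm Z a b c d'))"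
proof -
  note G = LD_D[OF g] and H = LD_D[OF h]
  have Xs: "X a c = Var (a,c)" "X b d = Var (b,d)" "X b d' = Var (b,d')"
    using G H by (simp_all add: Xmat_def)
  have "Var (b,d') * Mm Z a b c d - Var (b,d) * Mm Z a b c d' = X b c * Mm Z a b d' d"
    unfolding Mm_def Xs by (simp add: algebra_simps)
  then have eq: "Poly_Mapping.single w0 1 * (Var (b,d') * Mm Z a b c d - Var (b,d) * Mm Z a b c d')
      = Poly_Mapping.single w0 1 * X b c * Mm Z a b d' d" by (simp add: mult.assoc)
  have "rep VV GG (gt dl) (Poly_Mapping.single w0 1 * X b c * Mm Z a b d' d)"
  proof (rule rep_XM)
    show "a \<noteq> b" "d' \<noteq> d" using G dd by auto
    show "a \<in> {1..m}" "b \<in> {1..m}" "d' \<in> {1..n}" "d \<in> {1..n}" "b \<in> {1..m}" "c \<in> {1..n}" using G H by auto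
    show "Poly_Mapping.keys w0 \<subseteq> VV" by (rule wV)
    assume bc: "(b,c) \<notin> Z"
    show "\<forall>k\<in>Poly_Mapping.keys (Mm Z a b d' d). gt dl (w0 + sv (b,c) + k)"
    proof
      fix k assume "k \<in> Poly_Mapping.keys (Mm Z a b d' d)"
      then show "gt dl (w0 + sv (b,c) + k)"
      proof (rule keys_MmE)
        assume z: "(a,d') \<notin> Z" and k: "k = sv (a,d') + sv (b,d)"
        show ?thesis by (rule gtI[OF H(9)[OF z bc], where C="w0 + sv (b,d)"]) (simp_all add: dl k ac_simps)
      next
        assume z: "(a,d) \<notin> Z" and k: "k = sv (a,d) + sv (b,d')"
        show ?thesis by (rule gtI[OF G(9)[OF z bc], where C="w0 + sv (b,d')"]) (simp_all add: dl k ac_simps)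
      qed
    qed
  qed
  then show ?thesis unfolding eq .
qed

lemma caseB2:
  assumes g: "LD a b c d" and h: "LD a b' c d" and bb: "b \<noteq> b'" and wV: "Poly_Mapping.keys w0 \<subseteq> VV"
    and dl: "dl = w0 + sv (b',d) + sv (a,c) + sv (b,d)"
  shows "rep VV GG (gt dl) (Poly_Mapping.single w0 1 * (Var (b',d) * Mm Z a b c d - Var (b,d) * Mm Z a b' c d))"
proof -
  note G = LD_D[OF g] and H = LD_D[OF h]
  have Xs: "X a c = Var (a,c)" "X b d = Var (b,d)" "X b' d = Var (b',d)"
    using G H by (simp_all add: Xmat_def)
  have "Var (b',d) * Mm Z a b c d - Var (b,d) * Mm Z a b' c d = X a d * Mm Z b b' d c"
    unfolding Mm_def Xs by (simp add: algebra_simps)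
  then have eq: "Poly_Mapping.single w0 1 * (Var (b',d) * Mm Z a b c d - Var (b,d) * Mm Z a b' c d)
      = Poly_Mapping.single w0 1 * X a d * Mm Z b b' d c" by (simp add: mult.assoc)
  have "rep VV GG (gt dl) (Poly_Mapping.single w0 1 * X a d * Mm Z b b' d c)"
  proof (rule rep_XM)
    show "b \<noteq> b'" "d \<noteq> c" using G bb by auto
    show "b \<in> {1..m}" "b' \<in> {1..m}" "d \<in> {1..n}" "c \<in> {1..n}" "a \<in> {1..m}" "d \<in> {1..n}" using G H by auto
    show "Poly_Mapping.keys w0 \<subseteq> VV" by (rule wV)
    assume ad: "(a,d) \<notin> Z"
    show "\<forall>k\<in>Poly_Mapping.keys (Mm Z b b' d c). gt dl (w0 + sv (a,d) + k)"
    proof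
      fix k assume "k \<in> Poly_Mapping.keys (Mm Z b b' d c)"
      then show "gt dl (w0 + sv (a,d) + k)"
      proof (rule keys_MmE)
        assume z: "(b',c) \<notin> Z" and k: "k = sv (b,d) + sv (b',c)"
        show ?thesis by (rule gtI[OF H(9)[OF ad z], where C="w0 + sv (b,d)"]) (simp_all add: dl k ac_simps)
      next
        assume z: "(b,c) \<notin> Z" and k: "k = sv (b,c) + sv (b',d)"
        show ?thesis by (rule gtI[OF G(9)[OF ad z], where C="w0 + sv (b',d)"]) (simp_all add: dl k ac_simps)
      qed
    qed
  qed
  then show ?thesis unfolding eq .
qed

lemma deg2_ext:
  assumes "y \<in> VV" "p \<in> VV" "u \<noteq> y" "u \<noteq> p" "w \<noteq> y" "w \<noteq> p"
    and g: "gt (sv y + sv p) (sv u + sv w)"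
  shows "\<exists>v\<in>{u,w}. (v,y) \<in> r \<and> (v,p) \<in> r"
proof -
  have "deg (sv y + sv p) = deg (sv u + sv w)" by (simp add: deg_add)
  then obtain v where v: "v \<in> VV" "Poly_Mapping.lookup (sv y + sv p) v < Poly_Mapping.lookup (sv u + sv w) v"
      "\<forall>z\<in>VV. (z, v) \<in> r \<longrightarrow> Poly_Mapping.lookup (sv y + sv p) z = Poly_Mapping.lookup (sv u + sv w) z"
    using g unfolding drl_greater_def by auto
  have vuw: "v = u \<or> v = w" using v(2) by (simp add: lookup_add split: if_splits)
  have vy: "v \<noteq> y" using v(2) assms(3,5) by (auto simp: lookup_add)
  have vp: "v \<noteq> p" using v(2) assms(4,6) by (auto simp: lookup_add)
  have "(v,y) \<in> r"
  proof (rule ccontr)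
    assume "(v,y) \<notin> r"
    then have "(y,v) \<in> r" using rtot[OF v(1) assms(1) vy] by blast
    then have "Poly_Mapping.lookup (sv y + sv p) y = Poly_Mapping.lookup (sv u + sv w) y" using v(3) assms(1) by blast
    then show False using assms(3,5) by (simp add: lookup_add)
  qed
  moreover have "(v,p) \<in> r"
  proof (rule ccontr)
    assume "(v,p) \<notin> r"
    then have "(p,v) \<in> r" using rtot[OF v(1) assms(2) vp] by blast
    then have "Poly_Mapping.lookup (sv y + sv p) p = Poly_Mapping.lookup (sv u + sv w) p" using v(3) assms(2) by blast
    then show False using assms(4,6) by (simp add: lookup_add)
  qed
  ultimately show ?thesis using vuw by blast
qed

lemma deg3_suff:
  assumes mu: "\<mu> \<in> {n1,n2,n3}" "\<mu> \<in> VV" "\<mu> \<noteq> l1" "\<mu> \<noteq> l2" "\<mu> \<noteq> l3"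
    and mn: "\<forall>z\<in>{l1,l2,l3,n1,n2,n3}. z \<noteq> \<mu> \<longrightarrow> (\<mu>,z) \<in> r"
  shows "gt (sv l1 + sv l2 + sv l3) (sv n1 + sv n2 + sv n3)"
proof -
  have dg: "deg (sv l1 + sv l2 + sv l3) = deg (sv n1 + sv n2 + sv n3)" by (simp add: deg_add)
  have l0: "Poly_Mapping.lookup (sv l1 + sv l2 + sv l3) \<mu> = 0"
    using mu(3-5) by (simp add: lookup_add)
  have n1: "Poly_Mapping.lookup (sv n1 + sv n2 + sv n3) \<mu> \<ge> 1"
    using mu(1) by (elim insertE emptyE) (simp_all add: lookup_add)
  have lt: "Poly_Mapping.lookup (sv l1 + sv l2 + sv l3) \<mu> < Poly_Mapping.lookup (sv n1 + sv n2 + sv n3) \<mu>"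
    using l0 n1 by simp
  have eq: "\<forall>z\<in>VV. (z, \<mu>) \<in> r \<longrightarrow> Poly_Mapping.lookup (sv l1 + sv l2 + sv l3) z = Poly_Mapping.lookup (sv n1 + sv n2 + sv n3) z"
  proof (intro ballI impI)
    fix z assume z: "z \<in> VV" "(z,\<mu>) \<in> r"
    have "z \<notin> {l1,l2,l3,n1,n2,n3}"
    proof
      assume zin: "z \<in> {l1,l2,l3,n1,n2,n3}"
      have "z \<noteq> \<mu>" using z(2) rirr by blast
      then have "(\<mu>,z) \<in> r" using mn zin by blast
      then have "(z,z) \<in> r" using rtr z(2) by blast
      then show False using rirr by blast
    qed
    then have "l1 \<noteq> z" "l2 \<noteq> z" "l3 \<noteq> z" "n1 \<noteq> z" "n2 \<noteq> z" "n3 \<noteq> z" by auto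
    then show "Poly_Mapping.lookup (sv l1 + sv l2 + sv l3) z = Poly_Mapping.lookup (sv n1 + sv n2 + sv n3) z"
      by (simp add: lookup_add)
  qed
  show ?thesis unfolding drl_greater_def using dg lt eq mu(2) by blast
qed

lemma three:
  assumes V: "y1 \<in> VV" "y2 \<in> VV" "y3 \<in> VV" "n12 \<in> VV" "n21 \<in> VV" "n13 \<in> VV" "n31 \<in> VV" "n23 \<in> VV" "n32 \<in> VV"
    and dist: "distinct [y1,y2,y3,n12,n21,n13,n31,n23,n32]"
    and g: "gt (sv y1 + sv y2) (sv n12 + sv n21)" and h: "gt (sv y1 + sv y3) (sv n13 + sv n31)"
  shows "gt (sv y1 + sv y2 + sv y3) (sv n12 + sv n23 + sv n31) \<or> gt (sv y1 + sv y2 + sv y3) (sv n13 + sv n21 + sv n32)"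
proof -
  have "\<exists>v\<in>{n12,n21}. (v,y1) \<in> r \<and> (v,y2) \<in> r"
    by (rule deg2_ext[OF V(1,2) _ _ _ _ g]) (use dist in auto)
  then obtain v1 where v1: "v1 \<in> {n12,n21}" "(v1,y1) \<in> r" "(v1,y2) \<in> r" by blast
  have "\<exists>v\<in>{n13,n31}. (v,y1) \<in> r \<and> (v,y3) \<in> r"
    by (rule deg2_ext[OF V(1,3) _ _ _ _ h]) (use dist in auto)
  then obtain v2 where v2: "v2 \<in> {n13,n31}" "(v2,y1) \<in> r" "(v2,y3) \<in> r" by blast
  let ?S = "{y1,y2,y3,n12,n21,n13,n31,n23,n32}"
  have SV: "?S \<subseteq> VV" using V by simp
  obtain \<mu> where mu: "\<mu> \<in> ?S" "\<forall>z\<in>?S. z \<noteq> \<mu> \<longrightarrow> (\<mu>,z) \<in> r"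
    using min_exists[OF _ _ SV] by blast
  have v1S: "v1 \<in> ?S" "v1 \<noteq> y1" "v1 \<noteq> y2" using v1(1) dist by auto
  have v2S: "v2 \<in> ?S" "v2 \<noteq> y3" using v2(1) dist by auto
  have ny1: "\<mu> \<noteq> y1"
  proof
    assume e: "\<mu> = y1"
    have "(y1,v1) \<in> r" using mu(2) v1S(1,2) e by blast
    then have "(y1,y1) \<in> r" using rtr v1(2) by blast
    then show False using rirr by blast
  qed
  have ny2: "\<mu> \<noteq> y2"
  proof
    assume e: "\<mu> = y2"
    have "(y2,v1) \<in> r" using mu(2) v1S(1,3) e by blast
    then have "(y2,y2) \<in> r" using rtr v1(3) by blast
    then show False using rirr by blast
  qed
  have ny3: "\<mu> \<noteq> y3"
  proof
    assume e: "\<mu> = y3"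
    have "(y3,v2) \<in> r" using mu(2) v2S e by blast
    then have "(y3,y3) \<in> r" using rtr v2(3) by blast
    then show False using rirr by blast
  qed
  have muV: "\<mu> \<in> VV" using mu(1) SV by blast
  have m1: "\<forall>z\<in>{y1,y2,y3,n12,n23,n31}. z \<noteq> \<mu> \<longrightarrow> (\<mu>,z) \<in> r" using mu(2) by simp
  have m2: "\<forall>z\<in>{y1,y2,y3,n13,n21,n32}. z \<noteq> \<mu> \<longrightarrow> (\<mu>,z) \<in> r" using mu(2) by simp
  have "\<mu> \<in> {n12,n23,n31} \<or> \<mu> \<in> {n13,n21,n32}" using mu(1) ny1 ny2 ny3 by auto
  then show ?thesis
  proof
    assume "\<mu> \<in> {n12,n23,n31}"
    from deg3_suff[OF this muV ny1 ny2 ny3 m1] show ?thesis ..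
  next
    assume "\<mu> \<in> {n13,n21,n32}"
    from deg3_suff[OF this muV ny1 ny2 ny3 m2] show ?thesis ..
  qed
qed

end


context mz begin

lemma caseB3:
  assumes g: "LD a b c d" and h: "LD a b' c d'" and bb: "b \<noteq> b'" and dd: "d \<noteq> d'"
    and wV: "Poly_Mapping.keys w0 \<subseteq> VV"
    and dl: "dl = w0 + sv (b',d') + sv (a,c) + sv (b,d)"
  shows "rep VV GG (gt dl) (Poly_Mapping.single w0 1 * (Var (b',d') * Mm Z a b c d - Var (b,d) * Mm Z a b' c d'))"
proof -
  note G = LD_D[OF g] and H = LD_D[OF h]
  have Xs: "X a c = Var (a,c)" "X b d = Var (b,d)" "X b' d' = Var (b',d')"
    using G H by (simp_all add: Xmat_def)
  define H1 where "H1 \<longleftrightarrow> ((a,d) \<notin> Z \<and> (b,d') \<notin> Z \<and> (b',c) \<notin> Z \<longrightarrow> gt dl (w0 + sv (a,d) + sv (b,d') + sv (b',c)))"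
  define H2 where "H2 \<longleftrightarrow> ((a,d') \<notin> Z \<and> (b,c) \<notin> Z \<and> (b',d) \<notin> Z \<longrightarrow> gt dl (w0 + sv (a,d') + sv (b,c) + sv (b',d)))"
  have H12: "H1 \<or> H2"
  proof (cases "(a,d) \<notin> Z \<and> (b,d') \<notin> Z \<and> (b',c) \<notin> Z \<and> (a,d') \<notin> Z \<and> (b,c) \<notin> Z \<and> (b',d) \<notin> Z")
    case False then show ?thesis unfolding H1_def H2_def by blast
  next
    case True
    have inV: "(a,c) \<in> VV" "(b,d) \<in> VV" "(b',d') \<in> VV" "(a,d) \<in> VV" "(b,c) \<in> VV" "(a,d') \<in> VV"
      "(b',c) \<in> VV" "(b,d') \<in> VV" "(b',d) \<in> VV" using G H True by auto
    have ne: "a \<noteq> b" "b \<noteq> a" "a \<noteq> b'" "b' \<noteq> a" "b \<noteq> b'" "b' \<noteq> b" "c \<noteq> d" "d \<noteq> c" "c \<noteq> d'" "d' \<noteq> c" "d \<noteq> d'" "d' \<noteq> d"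
      using G H bb dd by auto
    have dist: "distinct [(a,c), (b,d), (b',d'), (a,d), (b,c), (a,d'), (b',c), (b,d'), (b',d)]"
      using ne by simp
    have "gt (sv (a,c) + sv (b,d) + sv (b',d')) (sv (a,d) + sv (b,d') + sv (b',c)) \<or>
          gt (sv (a,c) + sv (b,d) + sv (b',d')) (sv (a,d') + sv (b,c) + sv (b',d))"
      by (rule three[OF inV dist G(9) H(9)]) (use True in auto)
    then show ?thesis
    proof
      assume "gt (sv (a,c) + sv (b,d) + sv (b',d')) (sv (a,d) + sv (b,d') + sv (b',c))"
      then have "gt dl (w0 + sv (a,d) + sv (b,d') + sv (b',c))"
        by (rule gtI[where C=w0]) (simp_all add: dl ac_simps)
      then show ?thesis unfolding H1_def by blast
    next
      assume "gt (sv (a,c) + sv (b,d) + sv (b',d')) (sv (a,d') + sv (b,c) + sv (b',d))"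
      then have "gt dl (w0 + sv (a,d') + sv (b,c) + sv (b',d))"
        by (rule gtI[where C=w0]) (simp_all add: dl ac_simps)
      then show ?thesis unfolding H2_def by blast
    qed
  qed
  from H12 show ?thesis
  proof
    assume H1
    have "Var (b',d') * Mm Z a b c d - Var (b,d) * Mm Z a b' c d' = X b' c * Mm Z a b d' d + X a d * Mm Z b b' d' c"
      unfolding Mm_def Xs by (simp add: algebra_simps)
    then have eq: "Poly_Mapping.single w0 1 * (Var (b',d') * Mm Z a b c d - Var (b,d) * Mm Z a b' c d')
      = Poly_Mapping.single w0 1 * X b' c * Mm Z a b d' d + Poly_Mapping.single w0 1 * X a d * Mm Z b b' d' c"
      by (simp add: algebra_simps)
    have r1: "rep VV GG (gt dl) (Poly_Mapping.single w0 1 * X b' c * Mm Z a b d' d)"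
    proof (rule rep_XM)
      show "a \<noteq> b" "d' \<noteq> d" using G dd by auto
      show "a \<in> {1..m}" "b \<in> {1..m}" "d' \<in> {1..n}" "d \<in> {1..n}" "b' \<in> {1..m}" "c \<in> {1..n}" using G H by auto
      show "Poly_Mapping.keys w0 \<subseteq> VV" by (rule wV)
      assume bc: "(b',c) \<notin> Z"
      show "\<forall>k\<in>Poly_Mapping.keys (Mm Z a b d' d). gt dl (w0 + sv (b',c) + k)"
      proof
        fix k assume "k \<in> Poly_Mapping.keys (Mm Z a b d' d)"
        then show "gt dl (w0 + sv (b',c) + k)"
        proof (rule keys_MmE)
          assume z: "(a,d') \<notin> Z" and k: "k = sv (a,d') + sv (b,d)"
          show ?thesis by (rule gtI[OF H(9)[OF z bc], where C="w0 + sv (b,d)"]) (simp_all add: dl k ac_simps)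
        next
          assume z: "(a,d) \<notin> Z" "(b,d') \<notin> Z" and k: "k = sv (a,d) + sv (b,d')"
          have "gt dl (w0 + sv (a,d) + sv (b,d') + sv (b',c))" using \<open>H1\<close> z bc unfolding H1_def by blast
          moreover have "w0 + sv (a,d) + sv (b,d') + sv (b',c) = w0 + sv (b',c) + k" by (simp add: k ac_simps)
          ultimately show ?thesis by simp
        qed
      qed
    qed
    have r2: "rep VV GG (gt dl) (Poly_Mapping.single w0 1 * X a d * Mm Z b b' d' c)"
    proof (rule rep_XM)
      show "b \<noteq> b'" "d' \<noteq> c" using H bb by auto
      show "b \<in> {1..m}" "b' \<in> {1..m}" "d' \<in> {1..n}" "c \<in> {1..n}" "a \<in> {1..m}" "d \<in> {1..n}" using G H by auto
      show "Poly_Mapping.keys w0 \<subseteq> VV" by (rule wV)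
      assume ad: "(a,d) \<notin> Z"
      show "\<forall>k\<in>Poly_Mapping.keys (Mm Z b b' d' c). gt dl (w0 + sv (a,d) + k)"
      proof
        fix k assume "k \<in> Poly_Mapping.keys (Mm Z b b' d' c)"
        then show "gt dl (w0 + sv (a,d) + k)"
        proof (rule keys_MmE)
          assume z: "(b,d') \<notin> Z" "(b',c) \<notin> Z" and k: "k = sv (b,d') + sv (b',c)"
          have "gt dl (w0 + sv (a,d) + sv (b,d') + sv (b',c))" using \<open>H1\<close> z ad unfolding H1_def by blast
          moreover have "w0 + sv (a,d) + sv (b,d') + sv (b',c) = w0 + sv (a,d) + k" by (simp add: k ac_simps)
          ultimately show ?thesis by simp
        next
          assume z: "(b,c) \<notin> Z" and k: "k = sv (b,c) + sv (b',d')"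
          show ?thesis by (rule gtI[OF G(9)[OF ad z], where C="w0 + sv (b',d')"]) (simp_all add: dl k ac_simps)
        qed
      qed
    qed
    show ?thesis unfolding eq by (rule rep_add[OF r2 r1])
  next
    assume H2
    have "Var (b',d') * Mm Z a b c d - Var (b,d) * Mm Z a b' c d' = X a d' * Mm Z b b' d c + X b c * Mm Z a b' d' d"
      unfolding Mm_def Xs by (simp add: algebra_simps)
    then have eq: "Poly_Mapping.single w0 1 * (Var (b',d') * Mm Z a b c d - Var (b,d) * Mm Z a b' c d')
      = Poly_Mapping.single w0 1 * X a d' * Mm Z b b' d c + Poly_Mapping.single w0 1 * X b c * Mm Z a b' d' d"
      by (simp add: algebra_simps)
    have r1: "rep VV GG (gt dl) (Poly_Mapping.single w0 1 * X a d' * Mm Z b b' d c)"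
    proof (rule rep_XM)
      show "b \<noteq> b'" "d \<noteq> c" using G bb by auto
      show "b \<in> {1..m}" "b' \<in> {1..m}" "d \<in> {1..n}" "c \<in> {1..n}" "a \<in> {1..m}" "d' \<in> {1..n}" using G H by auto
      show "Poly_Mapping.keys w0 \<subseteq> VV" by (rule wV)
      assume ad: "(a,d') \<notin> Z"
      show "\<forall>k\<in>Poly_Mapping.keys (Mm Z b b' d c). gt dl (w0 + sv (a,d') + k)"
      proof
        fix k assume "k \<in> Poly_Mapping.keys (Mm Z b b' d c)"
        then show "gt dl (w0 + sv (a,d') + k)"
        proof (rule keys_MmE)
          assume z: "(b',c) \<notin> Z" and k: "k = sv (b,d) + sv (b',c)"
          show ?thesis by (rule gtI[OF H(9)[OF ad z], where C="w0 + sv (b,d)"]) (simp_all add: dl k ac_simps)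
        next
          assume z: "(b,c) \<notin> Z" "(b',d) \<notin> Z" and k: "k = sv (b,c) + sv (b',d)"
          have "gt dl (w0 + sv (a,d') + sv (b,c) + sv (b',d))" using \<open>H2\<close> z ad unfolding H2_def by blast
          moreover have "w0 + sv (a,d') + sv (b,c) + sv (b',d) = w0 + sv (a,d') + k" by (simp add: k ac_simps)
          ultimately show ?thesis by simp
        qed
      qed
    qed
    have r2: "rep VV GG (gt dl) (Poly_Mapping.single w0 1 * X b c * Mm Z a b' d' d)"
    proof (rule rep_XM)
      show "a \<noteq> b'" "d' \<noteq> d" using H dd by auto
      show "a \<in> {1..m}" "b' \<in> {1..m}" "d' \<in> {1..n}" "d \<in> {1..n}" "b \<in> {1..m}" "c \<in> {1..n}" using G H by auto
      show "Poly_Mapping.keys w0 \<subseteq> VV" by (rule wV)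
      assume bc: "(b,c) \<notin> Z"
      show "\<forall>k\<in>Poly_Mapping.keys (Mm Z a b' d' d). gt dl (w0 + sv (b,c) + k)"
      proof
        fix k assume "k \<in> Poly_Mapping.keys (Mm Z a b' d' d)"
        then show "gt dl (w0 + sv (b,c) + k)"
        proof (rule keys_MmE)
          assume z: "(a,d') \<notin> Z" "(b',d) \<notin> Z" and k: "k = sv (a,d') + sv (b',d)"
          have "gt dl (w0 + sv (a,d') + sv (b,c) + sv (b',d))" using \<open>H2\<close> z bc unfolding H2_def by blast
          moreover have "w0 + sv (a,d') + sv (b,c) + sv (b',d) = w0 + sv (b,c) + k" by (simp add: k ac_simps)
          ultimately show ?thesis by simp
        next
          assume z: "(a,d) \<notin> Z" and k: "k = sv (a,d) + sv (b',d')"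
          show ?thesis by (rule gtI[OF G(9)[OF z bc], where C="w0 + sv (b',d')"]) (simp_all add: dl k ac_simps)
        qed
      qed
    qed
    show ?thesis unfolding eq by (rule rep_add[OF r2 r1])
  qed
qed

lemma caseA:
  assumes g: "LD a b c d" and h: "LD a' b' c' d'" and wV: "Poly_Mapping.keys w0 \<subseteq> VV"
    and dl: "dl = w0 + sv (a',c') + sv (b',d') + sv (a,c) + sv (b,d)"
  shows "rep VV GG (gt dl) (Poly_Mapping.single w0 1 *
     (Var (a',c') * Var (b',d') * Mm Z a b c d - Var (a,c) * Var (b,d) * Mm Z a' b' c' d'))"
proof -
  note G = LD_D[OF g] and H = LD_D[OF h]
  have Xs: "X a c = Var (a,c)" "X b d = Var (b,d)" "X a' c' = Var (a',c')" "X b' d' = Var (b',d')"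
    using G H by (simp_all add: Xmat_def)
  have idA: "Var (a',c') * Var (b',d') * Mm Z a b c d - Var (a,c) * Var (b,d) * Mm Z a' b' c' d'
      = X a' d' * X b' c' * Mm Z a b c d - X a d * X b c * Mm Z a' b' c' d'"
    unfolding Mm_def Xs by (simp add: algebra_simps)
  have eq: "Poly_Mapping.single w0 1 * (Var (a',c') * Var (b',d') * Mm Z a b c d - Var (a,c) * Var (b,d) * Mm Z a' b' c' d')
      = Poly_Mapping.single w0 1 * X a' d' * X b' c' * Mm Z a b c d - Poly_Mapping.single w0 1 * X a d * X b c * Mm Z a' b' c' d'"
    unfolding idA by (simp add: algebra_simps)
  have chain: "gt dl (w0 + sv (a',d') + sv (b',c') + sv (a,d) + sv (b,c))"
    if z: "(a,d) \<notin> Z" "(b,c) \<notin> Z" "(a',d') \<notin> Z" "(b',c') \<notin> Z"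
  proof -
    have 1: "gt dl (w0 + sv (a',c') + sv (b',d') + (sv (a,d) + sv (b,c)))"
      by (rule gtI[OF G(9)[OF z(1,2)], where C="w0 + sv (a',c') + sv (b',d')"]) (simp_all add: dl ac_simps)
    have 2: "gt (w0 + sv (a',c') + sv (b',d') + (sv (a,d) + sv (b,c))) (w0 + sv (a',d') + sv (b',c') + sv (a,d) + sv (b,c))"
      by (rule gtI[OF H(9)[OF z(3,4)], where C="w0 + sv (a,d) + sv (b,c)"]) (simp_all add: ac_simps)
    show ?thesis using gt_trans[OF 1 2] .
  qed
  have r1: "rep VV GG (gt dl) (Poly_Mapping.single w0 1 * X a' d' * X b' c' * Mm Z a b c d)"
  proof (rule rep_XXM)
    show "a \<noteq> b" "c \<noteq> d" using G by auto
    show "a \<in> {1..m}" "b \<in> {1..m}" "c \<in> {1..n}" "d \<in> {1..n}" "a' \<in> {1..m}" "d' \<in> {1..n}" "b' \<in> {1..m}" "c' \<in> {1..n}"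
      using G H by auto
    show "Poly_Mapping.keys w0 \<subseteq> VV" by (rule wV)
    assume z1: "(a',d') \<notin> Z" and z2: "(b',c') \<notin> Z"
    show "\<forall>k\<in>Poly_Mapping.keys (Mm Z a b c d). gt dl (w0 + sv (a',d') + sv (b',c') + k)"
    proof
      fix k assume "k \<in> Poly_Mapping.keys (Mm Z a b c d)"
      then show "gt dl (w0 + sv (a',d') + sv (b',c') + k)"
      proof (rule keys_MmE)
        assume k: "k = sv (a,c) + sv (b,d)"
        show ?thesis by (rule gtI[OF H(9)[OF z1 z2], where C="w0 + sv (a,c) + sv (b,d)"]) (simp_all add: dl k ac_simps)
      next
        assume z: "(a,d) \<notin> Z" "(b,c) \<notin> Z" and k: "k = sv (a,d) + sv (b,c)"
        have "gt dl (w0 + sv (a',d') + sv (b',c') + sv (a,d) + sv (b,c))" using chain z z1 z2 by blast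
        then show ?thesis by (simp add: k ac_simps)
      qed
    qed
  qed
  have r2: "rep VV GG (gt dl) (Poly_Mapping.single w0 1 * X a d * X b c * Mm Z a' b' c' d')"
  proof (rule rep_XXM)
    show "a' \<noteq> b'" "c' \<noteq> d'" using H by auto
    show "a' \<in> {1..m}" "b' \<in> {1..m}" "c' \<in> {1..n}" "d' \<in> {1..n}" "a \<in> {1..m}" "d \<in> {1..n}" "b \<in> {1..m}" "c \<in> {1..n}"
      using G H by auto
    show "Poly_Mapping.keys w0 \<subseteq> VV" by (rule wV)
    assume z1: "(a,d) \<notin> Z" and z2: "(b,c) \<notin> Z"
    show "\<forall>k\<in>Poly_Mapping.keys (Mm Z a' b' c' d'). gt dl (w0 + sv (a,d) + sv (b,c) + k)"
    proof
      fix k assume "k \<in> Poly_Mapping.keys (Mm Z a' b' c' d')"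
      then show "gt dl (w0 + sv (a,d) + sv (b,c) + k)"
      proof (rule keys_MmE)
        assume k: "k = sv (a',c') + sv (b',d')"
        show ?thesis by (rule gtI[OF G(9)[OF z1 z2], where C="w0 + sv (a',c') + sv (b',d')"]) (simp_all add: dl k ac_simps)
      next
        assume z: "(a',d') \<notin> Z" "(b',c') \<notin> Z" and k: "k = sv (a',d') + sv (b',c')"
        have "gt dl (w0 + sv (a',d') + sv (b',c') + sv (a,d) + sv (b,c))" using chain z z1 z2 by blast
        then show ?thesis by (simp add: k ac_simps)
      qed
    qed
  qed
  show ?thesis unfolding eq by (rule rep_diff[OF r1 r2])
qed

end


context mz begin

lemma cancel_left_mon:
  fixes x y z :: mon
  shows "z + x = z + y \<Longrightarrow> x = y"
  by (rule add_left_imp_eq)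

lemma core_shared:
  assumes g: "LD a b c d" and h: "LD a b' c d'" and tV: "Poly_Mapping.keys t \<subseteq> VV"
    and dt: "t + sv (a,c) + sv (b,d) = dl" and ds: "s + sv (a,c) + sv (b',d') = dl"
  shows "rep VV GG (gt dl) (Poly_Mapping.single t 1 * Mm Z a b c d - Poly_Mapping.single s 1 * Mm Z a b' c d')"
proof -
  note G = LD_D[OF g] and H = LD_D[OF h]
  have "sv (a,c) + (t + sv (b,d)) = sv (a,c) + (s + sv (b',d'))" using dt ds by (simp add: ac_simps)
  then have tp: "t + sv (b,d) = s + sv (b',d')" by (rule cancel_left_mon)
  show ?thesis
  proof (cases "(b,d) = (b',d')")
    case True
    then have e: "b' = b" "d' = d" by auto
    have "s + sv (b,d) = t + sv (b,d)" using tp e by simp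
    then have "s = t" by (rule add_right_imp_eq)
    then show ?thesis using e by (simp add: rep.rep0)
  next
    case False
    define w0 where "w0 = t - sv (b',d')"
    have le: "Poly_Mapping.lookup (sv (b',d')) v \<le> Poly_Mapping.lookup t v" for v
    proof (cases "v = (b',d')")
      case True
      have "Poly_Mapping.lookup (t + sv (b,d)) v = Poly_Mapping.lookup (s + sv (b',d')) v" using tp by simp
      moreover have "Poly_Mapping.lookup (sv (b,d)) v = 0" "Poly_Mapping.lookup (sv (b',d')) v = 1"
        using True False by auto
      ultimately show ?thesis using True by (simp add: lookup_add)
    next
      case False then show ?thesis by simp
    qed
    have t_eq: "t = w0 + sv (b',d')" unfolding w0_def by (rule mon_split) (rule le)
    have "(w0 + sv (b,d)) + sv (b',d') = s + sv (b',d')" using tp t_eq by (simp add: ac_simps)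
    then have s_eq: "s = w0 + sv (b,d)" by (simp only: add_right_cancel)
    have wV: "Poly_Mapping.keys w0 \<subseteq> VV" using keys_minus_sub[of t "sv (b',d')"] tV unfolding w0_def by blast
    have dl_eq: "dl = w0 + sv (b',d') + sv (a,c) + sv (b,d)" using dt t_eq by simp
    have St: "Poly_Mapping.single t (1::complex) = Poly_Mapping.single w0 1 * Var (b',d')"
      unfolding t_eq by (simp add: Var_sv mult_single)
    have Ss: "Poly_Mapping.single s (1::complex) = Poly_Mapping.single w0 1 * Var (b,d)"
      unfolding s_eq by (simp add: Var_sv mult_single)
    have E: "Poly_Mapping.single t 1 * Mm Z a b c d - Poly_Mapping.single s 1 * Mm Z a b' c d'
       = Poly_Mapping.single w0 1 * (Var (b',d') * Mm Z a b c d - Var (b,d) * Mm Z a b' c d')"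
      unfolding St Ss by (simp add: algebra_simps)
    show ?thesis unfolding E
    proof (cases "b = b'")
      case True
      then have dd: "d \<noteq> d'" using False by auto
      have h': "LD a b c d'" using h True by simp
      show "rep VV GG (gt dl) (Poly_Mapping.single w0 1 * (Var (b',d') * Mm Z a b c d - Var (b,d) * Mm Z a b' c d'))"
        using caseB1[OF g h' dd wV, of dl] dl_eq True by simp
    next
      case bb: False
      show "rep VV GG (gt dl) (Poly_Mapping.single w0 1 * (Var (b',d') * Mm Z a b c d - Var (b,d) * Mm Z a b' c d'))"
      proof (cases "d = d'")
        case True
        have h': "LD a b' c d" using h True by simp
        show ?thesis using caseB2[OF g h' bb wV, of dl] dl_eq True by simp
      next
        case dd: False
        show ?thesis by (rule caseB3[OF g h bb dd wV dl_eq])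
      qed
    qed
  qed
qed

lemma core_disjoint:
  assumes g: "LD a b c d" and h: "LD a' b' c' d'" and tV: "Poly_Mapping.keys t \<subseteq> VV"
    and dt: "t + sv (a,c) + sv (b,d) = dl" and ds: "s + sv (a',c') + sv (b',d') = dl"
    and n1: "(a',c') \<noteq> (a,c)" "(a',c') \<noteq> (b,d)" and n2: "(b',d') \<noteq> (a,c)" "(b',d') \<noteq> (b,d)"
  shows "rep VV GG (gt dl) (Poly_Mapping.single t 1 * Mm Z a b c d - Poly_Mapping.single s 1 * Mm Z a' b' c' d')"
proof -
  note G = LD_D[OF g] and H = LD_D[OF h]
  have n3: "(a',c') \<noteq> (b',d')" using H by auto
  define q where "q = sv (a',c') + sv (b',d')"
  define w0 where "w0 = t - q"
  have eq: "t + sv (a,c) + sv (b,d) = s + sv (a',c') + sv (b',d')" using dt ds by simp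
  have le: "Poly_Mapping.lookup q v \<le> Poly_Mapping.lookup t v" for v
  proof -
    have L: "Poly_Mapping.lookup (t + sv (a,c) + sv (b,d)) v = Poly_Mapping.lookup (s + sv (a',c') + sv (b',d')) v"
      using eq by simp
    consider "v = (a',c')" | "v = (b',d')" | "v \<noteq> (a',c')" "v \<noteq> (b',d')" by blast
    then show ?thesis
    proof cases
      case 1
      have "Poly_Mapping.lookup (sv (a,c)) v = 0" "Poly_Mapping.lookup (sv (b,d)) v = 0"
        "Poly_Mapping.lookup (sv (a',c')) v = 1" "Poly_Mapping.lookup (sv (b',d')) v = 0"
        using 1 n1 n3 by auto
      then show ?thesis using L unfolding q_def by (simp add: lookup_add)
    next
      case 2
      have "Poly_Mapping.lookup (sv (a,c)) v = 0" "Poly_Mapping.lookup (sv (b,d)) v = 0"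
        "Poly_Mapping.lookup (sv (a',c')) v = 0" "Poly_Mapping.lookup (sv (b',d')) v = 1"
        using 2 n2 n3 by auto
      then show ?thesis using L unfolding q_def by (simp add: lookup_add)
    next
      case 3 then show ?thesis unfolding q_def by (simp add: lookup_add)
    qed
  qed
  have t_eq: "t = w0 + q" unfolding w0_def by (rule mon_split) (rule le)
  have "(w0 + sv (a,c) + sv (b,d)) + q = s + q" using eq t_eq unfolding q_def by (simp add: ac_simps)
  then have s_eq: "s = w0 + sv (a,c) + sv (b,d)" by (simp only: add_right_cancel)
  have wV: "Poly_Mapping.keys w0 \<subseteq> VV" using keys_minus_sub[of t q] tV unfolding w0_def by blast
  have dl_eq: "dl = w0 + sv (a',c') + sv (b',d') + sv (a,c) + sv (b,d)" using dt t_eq unfolding q_def by (simp add: ac_simps)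
  have St: "Poly_Mapping.single t (1::complex) = Poly_Mapping.single w0 1 * Var (a',c') * Var (b',d')"
    unfolding t_eq q_def by (simp add: Var_sv mult_single add.assoc)
  have Ss: "Poly_Mapping.single s (1::complex) = Poly_Mapping.single w0 1 * Var (a,c) * Var (b,d)"
    unfolding s_eq by (simp add: Var_sv mult_single add.assoc)
  have E: "Poly_Mapping.single t 1 * Mm Z a b c d - Poly_Mapping.single s 1 * Mm Z a' b' c' d'
     = Poly_Mapping.single w0 1 * (Var (a',c') * Var (b',d') * Mm Z a b c d - Var (a,c) * Var (b,d) * Mm Z a' b' c' d')"
    unfolding St Ss by (simp add: algebra_simps)
  show ?thesis unfolding E by (rule caseA[OF g h wV dl_eq])
qed

lemma core:
  assumes g: "LD a b c d" and h: "LD a' b' c' d'" and tV: "Poly_Mapping.keys t \<subseteq> VV" and sV: "Poly_Mapping.keys s \<subseteq> VV"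
    and dt: "t + sv (a,c) + sv (b,d) = dl" and ds: "s + sv (a',c') + sv (b',d') = dl"
  shows "rep VV GG (gt dl) (Poly_Mapping.single t 1 * Mm Z a b c d - Poly_Mapping.single s 1 * Mm Z a' b' c' d')"
proof -
  have dt': "t + sv (b,d) + sv (a,c) = dl" using dt by (simp add: ac_simps)
  have ds': "s + sv (b',d') + sv (a',c') = dl" using ds by (simp add: ac_simps)
  have gs: "LD b a d c" by (rule LD_swap[OF g])
  have hs: "LD b' a' d' c'" by (rule LD_swap[OF h])
  have Mg: "Mm Z b a d c = Mm Z a b c d" by (rule Mm_swap)
  have Mh: "Mm Z b' a' d' c' = Mm Z a' b' c' d'" by (rule Mm_swap)
  consider (c1) "(a',c') = (a,c)" | (c2) "(b',d') = (a,c)" | (c3) "(a',c') = (b,d)" | (c4) "(b',d') = (b,d)"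
    | (c5) "(a',c') \<noteq> (a,c)" "(a',c') \<noteq> (b,d)" "(b',d') \<noteq> (a,c)" "(b',d') \<noteq> (b,d)" by blast
  then show ?thesis
  proof cases
    case c1
    then have e: "a' = a" "c' = c" by auto
    show ?thesis using core_shared[OF g h[unfolded e] tV dt ds[unfolded e]] e by simp
  next
    case c2
    then have e: "b' = a" "d' = c" by auto
    show ?thesis using core_shared[OF g hs[unfolded e] tV dt ds'[unfolded e]] e Mh by simp
  next
    case c3
    then have e: "a' = b" "c' = d" by auto
    show ?thesis using core_shared[OF gs h[unfolded e] tV dt' ds[unfolded e]] e Mg by simp
  next
    case c4
    then have e: "b' = b" "d' = d" by auto
    show ?thesis using core_shared[OF gs hs[unfolded e] tV dt' ds'[unfolded e]] e Mg Mh by simp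
  next
    case c5
    show ?thesis by (rule core_disjoint[OF g h tV dt ds c5])
  qed
qed

lemma norm_g:
  assumes "g \<in> GG" "g \<noteq> 0"
  obtains a b c d where "LD a b c d" "init_mon VV r g = sv (a,c) + sv (b,d)"
    "\<And>t. Poly_Mapping.single t (1 / Poly_Mapping.lookup g (init_mon VV r g)) * g = Poly_Mapping.single t 1 * Mm Z a b c d"
proof -
  obtain a b c d where L: "LD a b c d" and gc: "g = Mm Z a b c d \<or> g = - Mm Z a b c d"
    using decomp[OF assms] by blast
  note G = LD_D[OF L]
  have i: "init_mon VV r (Mm Z a b c d) = sv (a,c) + sv (b,d)" by (rule inm_Mm[OF L])
  have l: "Poly_Mapping.lookup (Mm Z a b c d) (sv (a,c) + sv (b,d)) = 1"
    by (rule lookup_Mm_lead[OF G(1,2,7,8)])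
  from gc show ?thesis
  proof
    assume e: "g = Mm Z a b c d"
    show ?thesis by (rule that[OF L]) (unfold e i l, simp_all)
  next
    assume e: "g = - Mm Z a b c d"
    show ?thesis by (rule that[OF L]) (unfold e inm_neg i lookup_uminus l, simp_all add: single_uminus)
  qed
qed

lemma Shyp_mz:
  assumes "g \<in> GG" "h \<in> GG" "g \<noteq> 0" "h \<noteq> 0" "Poly_Mapping.keys t \<subseteq> VV" "Poly_Mapping.keys s \<subseteq> VV"
    "t + init_mon VV r g = dl" "s + init_mon VV r h = dl"
  shows "rep VV GG (gt dl) (Poly_Mapping.single t (1 / Poly_Mapping.lookup g (init_mon VV r g)) * g
                    - Poly_Mapping.single s (1 / Poly_Mapping.lookup h (init_mon VV r h)) * h)"
proof -
  obtain a b c d where g1: "LD a b c d" "init_mon VV r g = sv (a,c) + sv (b,d)"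
    "\<And>t. Poly_Mapping.single t (1 / Poly_Mapping.lookup g (init_mon VV r g)) * g = Poly_Mapping.single t 1 * Mm Z a b c d"
    using norm_g[OF assms(1,3)] by blast
  obtain a' b' c' d' where h1: "LD a' b' c' d'" "init_mon VV r h = sv (a',c') + sv (b',d')"
    "\<And>t. Poly_Mapping.single t (1 / Poly_Mapping.lookup h (init_mon VV r h)) * h = Poly_Mapping.single t 1 * Mm Z a' b' c' d'"
    using norm_g[OF assms(2,4)] by blast
  have dt: "t + sv (a,c) + sv (b,d) = dl" using assms(7) g1(2) by (simp add: add.assoc)
  have ds: "s + sv (a',c') + sv (b',d') = dl" using assms(8) h1(2) by (simp add: add.assoc)
  show ?thesis unfolding g1(3) h1(3) by (rule core[OF g1(1) h1(1) assms(5,6) dt ds])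
qed

sublocale gbl VV r GG
proof unfold_locales
  show "GG \<subseteq> polys VV" by (rule GG_polys)
  fix g h t s dl
  assume "g \<in> GG" "h \<in> GG" "g \<noteq> 0" "h \<noteq> 0" "Poly_Mapping.keys t \<subseteq> VV" "Poly_Mapping.keys s \<subseteq> VV"
    "t + init_mon VV r g = dl" "s + init_mon VV r h = dl"
  then show "rep VV GG (gt dl) (Poly_Mapping.single t (1 / Poly_Mapping.lookup g (init_mon VV r g)) * g
                    - Poly_Mapping.single s (1 / Poly_Mapping.lookup h (init_mon VV r h)) * h)"
    by (rule Shyp_mz)
qed

end


lemma polys_zero: "0 \<in> polys V"
  by (simp add: polys_def)

lemma polys_add: "p \<in> polys V \<Longrightarrow> q \<in> polys V \<Longrightarrow> p + q \<in> polys V"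
  unfolding polys_def using keys_add[of p q] by blast

lemma polys_mult:
  assumes "p \<in> polys V" "q \<in> polys V" shows "p * q \<in> polys V"
  unfolding polys_def
proof (intro CollectI ballI)
  fix k assume "k \<in> Poly_Mapping.keys (p * q)"
  then obtain a b where ab: "a \<in> Poly_Mapping.keys p" "b \<in> Poly_Mapping.keys q" "k = a + b"
    using keys_mult[of p q] by blast
  have "Poly_Mapping.keys a \<subseteq> V" "Poly_Mapping.keys b \<subseteq> V" using assms ab unfolding polys_def by blast+
  then show "Poly_Mapping.keys k \<subseteq> V" using ab(3) keys_add[of a b] by blast
qed

lemma polys_single: "Poly_Mapping.keys t \<subseteq> V \<Longrightarrow> Poly_Mapping.single t c \<in> polys V"
  by (simp add: polys_def)

lemma polys_one: "1 \<in> polys V"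
  by (simp add: polys_def)

lemma ideal_zero: "0 \<in> ideal_gen V B"
  unfolding ideal_gen_def by (rule CollectI, rule exI[of _ "{}"]) simp

lemma gen_in_ideal: "g \<in> B \<Longrightarrow> g \<in> ideal_gen V B"
  unfolding ideal_gen_def
  apply (rule CollectI, rule exI[of _ "{g}"], rule exI[of _ "\<lambda>_. 1"])
  using polys_one by simp

lemma ideal_add:
  assumes "f \<in> ideal_gen V B" "h \<in> ideal_gen V B" shows "f + h \<in> ideal_gen V B"
proof -
  obtain S1 c1 where 1: "finite S1" "S1 \<subseteq> B" "\<forall>g\<in>S1. c1 g \<in> polys V" "f = (\<Sum>g\<in>S1. c1 g * g)"
    using assms(1) unfolding ideal_gen_def by blast
  obtain S2 c2 where 2: "finite S2" "S2 \<subseteq> B" "\<forall>g\<in>S2. c2 g \<in> polys V" "h = (\<Sum>g\<in>S2. c2 g * g)"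
    using assms(2) unfolding ideal_gen_def by blast
  define c where "c g = (if g \<in> S1 then c1 g else 0) + (if g \<in> S2 then c2 g else 0)" for g
  have fin: "finite (S1 \<union> S2)" using 1 2 by simp
  have e1: "(\<Sum>g\<in>S1\<union>S2. (if g\<in>S1 then c1 g else 0) * g) = (\<Sum>g\<in>S1. c1 g * g)"
  proof -
    have "(\<Sum>g\<in>S1\<union>S2. (if g\<in>S1 then c1 g else 0) * g) = (\<Sum>g\<in>S1\<union>S2. if g \<in> S1 then c1 g * g else 0)"
      by (intro sum.cong) auto
    also have "\<dots> = (\<Sum>g\<in>{x\<in>S1\<union>S2. x\<in>S1}. c1 g * g)" by (rule sum.inter_filter[symmetric, OF fin])
    also have "{x\<in>S1\<union>S2. x\<in>S1} = S1" by auto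
    finally show ?thesis .
  qed
  have e2: "(\<Sum>g\<in>S1\<union>S2. (if g\<in>S2 then c2 g else 0) * g) = (\<Sum>g\<in>S2. c2 g * g)"
  proof -
    have "(\<Sum>g\<in>S1\<union>S2. (if g\<in>S2 then c2 g else 0) * g) = (\<Sum>g\<in>S1\<union>S2. if g \<in> S2 then c2 g * g else 0)"
      by (intro sum.cong) auto
    also have "\<dots> = (\<Sum>g\<in>{x\<in>S1\<union>S2. x\<in>S2}. c2 g * g)" by (rule sum.inter_filter[symmetric, OF fin])
    also have "{x\<in>S1\<union>S2. x\<in>S2} = S2" by auto
    finally show ?thesis .
  qed
  have eq: "f + h = (\<Sum>g\<in>S1\<union>S2. c g * g)"
    unfolding c_def distrib_right sum.distrib e1 e2 1(4) 2(4) ..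
  have cp: "\<forall>g\<in>S1\<union>S2. c g \<in> polys V"
  proof
    fix g assume "g \<in> S1 \<union> S2"
    have "(if g \<in> S1 then c1 g else 0) \<in> polys V" using 1(3) polys_zero by simp
    moreover have "(if g \<in> S2 then c2 g else 0) \<in> polys V" using 2(3) polys_zero by simp
    ultimately show "c g \<in> polys V" unfolding c_def by (rule polys_add)
  qed
  have sub: "S1 \<union> S2 \<subseteq> B" using 1(2) 2(2) by blast
  show ?thesis unfolding ideal_gen_def
    apply (rule CollectI, rule exI[of _ "S1 \<union> S2"], rule exI[of _ c])
    using fin sub cp eq by blast
qed

lemma ideal_mult:
  assumes "p \<in> polys V" "f \<in> ideal_gen V B" shows "p * f \<in> ideal_gen V B"
proof -
  obtain S c where 1: "finite S" "S \<subseteq> B" "\<forall>g\<in>S. c g \<in> polys V" "f = (\<Sum>g\<in>S. c g * g)"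
    using assms(2) unfolding ideal_gen_def by blast
  have eq: "p * f = (\<Sum>g\<in>S. (p * c g) * g)" unfolding 1(4) by (simp add: sum_distrib_left mult.assoc)
  have cp: "\<forall>g\<in>S. p * c g \<in> polys V" using 1(3) polys_mult[OF assms(1)] by blast
  show ?thesis unfolding ideal_gen_def
    apply (rule CollectI, rule exI[of _ S], rule exI[of _ "\<lambda>g. p * c g"])
    using 1(1,2) cp eq by blast
qed

lemma ideal_sum:
  assumes "finite A" "\<forall>x\<in>A. F x \<in> ideal_gen V B" shows "sum F A \<in> ideal_gen V B"
  using assms
proof (induction A rule: finite_induct)
  case empty then show ?case using ideal_zero by simp
next
  case (insert x A)
  then show ?case using ideal_add by simp
qed

lemma ideal_gen_mono: "A \<subseteq> B \<Longrightarrow> ideal_gen V A \<subseteq> ideal_gen V B"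
  unfolding ideal_gen_def by blast

lemma ideal_gen_sub:
  assumes "A \<subseteq> ideal_gen V B" shows "ideal_gen V A \<subseteq> ideal_gen V B"
proof
  fix f assume "f \<in> ideal_gen V A"
  then obtain S c where 1: "finite S" "S \<subseteq> A" "\<forall>g\<in>S. c g \<in> polys V" "f = (\<Sum>g\<in>S. c g * g)"
    unfolding ideal_gen_def by blast
  have "\<forall>g\<in>S. c g * g \<in> ideal_gen V B" using 1(2,3) assms ideal_mult by blast
  then have "(\<Sum>g\<in>S. c g * g) \<in> ideal_gen V B" by (rule ideal_sum[OF 1(1)])
  then show "f \<in> ideal_gen V B" using 1(4) by simp
qed

context mz begin

theorem mz_gb: "is_groebner_basis VV r GG (ideal_gen VV GG)"
  unfolding is_groebner_basis_def
proof (intro conjI)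
  show "GG \<subseteq> polys VV" by (rule GG_polys)
  show "finite GG" by (rule GG_finite)
  show "ideal_gen VV GG = ideal_gen VV GG" ..
  let ?J = "{mon_poly (init_mon VV r g) |g. g \<in> GG \<and> g \<noteq> 0}"
  show "init_ideal VV r (ideal_gen VV GG) = ideal_gen VV ?J"
    unfolding init_ideal_def
  proof (rule antisym)
    show "ideal_gen VV {mon_poly (init_mon VV r f) |f. f \<in> ideal_gen VV GG \<and> f \<noteq> 0} \<subseteq> ideal_gen VV ?J"
    proof (rule ideal_gen_sub, rule subsetI)
      fix x assume "x \<in> {mon_poly (init_mon VV r f) |f. f \<in> ideal_gen VV GG \<and> f \<noteq> 0}"
      then obtain f where f: "x = mon_poly (init_mon VV r f)" "f \<in> ideal_gen VV GG" "f \<noteq> 0" by blast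
      obtain g t where gt: "g \<in> GG" "g \<noteq> 0" "Poly_Mapping.keys t \<subseteq> VV" "init_mon VV r f = t + init_mon VV r g"
        using gb_core[OF f(2,3)] by blast
      have x: "x = Poly_Mapping.single t 1 * mon_poly (init_mon VV r g)"
        unfolding f(1) mon_poly_def gt(4) by (simp add: mult_single)
      have "mon_poly (init_mon VV r g) \<in> ?J" using gt(1,2) by blast
      then have "mon_poly (init_mon VV r g) \<in> ideal_gen VV ?J" by (rule gen_in_ideal)
      then show "x \<in> ideal_gen VV ?J" unfolding x by (rule ideal_mult[OF polys_single[OF gt(3)]])
    qed
    show "ideal_gen VV ?J \<subseteq> ideal_gen VV {mon_poly (init_mon VV r f) |f. f \<in> ideal_gen VV GG \<and> f \<noteq> 0}"
    proof (rule ideal_gen_mono, rule subsetI)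
      fix x assume "x \<in> ?J"
      then obtain g where g: "x = mon_poly (init_mon VV r g)" "g \<in> GG" "g \<noteq> 0" by blast
      have "g \<in> ideal_gen VV GG" by (rule gen_in_ideal[OF g(2)])
      then show "x \<in> {mon_poly (init_mon VV r f) |f. f \<in> ideal_gen VV GG \<and> f \<noteq> 0}" using g by blast
    qed
  qed
qed

end

theorem theorem5p5:
  fixes m n :: nat and Z :: "var set" and r :: "var rel"
  assumes "m \<ge> 1" and "n \<ge> 1"
    and "Z \<subseteq> {1..m} \<times> {1..n}"
    and "strict_linear_order_on ({1..m} \<times> {1..n} - Z) r"
  shows "is_groebner_basis ({1..m} \<times> {1..n} - Z) r (minors2 m n Z)
           (ideal_gen ({1..m} \<times> {1..n} - Z) (minors2 m n Z))"
proof -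
  interpret mz m n Z r by unfold_locales (rule assms(4))
  show ?thesis by (rule mz_gb)
qed


end
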